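(* Let $\mathcal{W}=\{\mathbb{R}^d;f_1,\dots,f_N;p_1,\dots,p_N\}$ be a weighted IFS with all $p_i>0$, $\sum p_i=1$, such that $s_i\|x-y\|\le\|f_i(x)-f_i(y)\|\le c_i\|x-y\|$ for all $x,y$, with $0<s_i\le c_i<1$, and assume $\mathcal{W}$ satisfies the strong open set condition. Then there is a word $\sigma\in\{1,\dots,N\}^*$ such that for every $m\in\mathbb{N}$ the weighted IFS $\mathcal{L}_m=\{\mathbb{R}^d;g_i;p_i:i\in\{1,\dots,N\}^m\}$ with $g_i=f_i\circ f_\sigma$ satisfies $S_i\|x-y\|\le\|g_i(x)-g_i(y)\|\le C_i\|x-y\|$ with $S_i=s_is_\sigma\in(0,1)$, $C_i=c_ic_\sigma\in(0,1)$, and satisfies the strong separation condition. Moreover, if $\mu_m^*$ is the invariant Borel probability measure of $\mathcal{L}_m$ and $r\in(0,\infty)$, there exists $n_0\in\mathbb{N}$ such that for every $n\ge n_0$ there are $n_i\in\mathbb{N}$ ($i\in\{1,\dots,N\}^m$) with $\sum_in_i\le n$ and $$V_{n,r}(\mu_m^* )\ge\sum_{i\in\{1,\dots,N\}^m}p_iS_i^rV_{n_i,r}(\mu_m^* ).$$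
   Context: For a word $\tau=\tau_1\cdots\tau_k$: $f_\tau=f_{\tau_1}\circ\cdots\circ f_{\tau_k}$, $p_\tau=p_{\tau_1}\cdots p_{\tau_k}$, $s_\tau=s_{\tau_1}\cdots s_{\tau_k}$, $c_\tau=c_{\tau_1}\cdots c_{\tau_k}$. The attractor $A$ of an IFS $\{\theta_k\}$ is the unique nonempty compact set with $A=\bigcup_k\theta_k(A)$. SOSC for $\mathcal{W}$: a nonempty open $U$ with $f_i(U)\subset U$, $f_i(U)\cap f_j(U)=\emptyset$ for $i\ne j$, and $U\cap A_\mathcal{W}\ne\emptyset$. SSC for $\mathcal{L}_m$: $g_i(A)\cap g_j(A)=\emptyset$ for $i\ne j$, where $A$ is the attractor of $\mathcal{L}_m$. Invariant measure of a weighted IFS $\{\theta_k;w_k\}$: unique Borel probability $\nu$ with $\nu=\sum_kw_k\nu\circ\theta_k^{-1}$. $V_{n,r}(\nu)=\inf\{\int\min_{a\in A}\|x-a\|^rd\nu(x):\operatorname{card}(A)\le n\}$. *)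

theory Defs
  imports "HOL-Probability.Probability"
begin

definition comp_word :: "('i \<Rightarrow> 'a \<Rightarrow> 'a) \<Rightarrow> 'i list \<Rightarrow> 'a \<Rightarrow> 'a" where
  "comp_word f \<tau> = foldr (\<lambda>i g. f i \<circ> g) \<tau> id"

definition prod_word :: "('i \<Rightarrow> real) \<Rightarrow> 'i list \<Rightarrow> real" where
  "prod_word p \<tau> = prod_list (map p \<tau>)"

definition words :: "nat \<Rightarrow> nat \<Rightarrow> nat list set" where
  "words N m = {\<tau>. length \<tau> = m \<and> set \<tau> \<subseteq> {1..N}}"

definition attractor :: "'i set \<Rightarrow> ('i \<Rightarrow> 'a::metric_space \<Rightarrow> 'a) \<Rightarrow> 'a set" where
  "attractor I \<theta> = (THE A. compact A \<and> A \<noteq> {} \<and> A = (\<Union>k\<in>I. \<theta> k ` A))"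

definition SOSC :: "'i set \<Rightarrow> ('i \<Rightarrow> 'a::metric_space \<Rightarrow> 'a) \<Rightarrow> bool" where
  "SOSC I f \<longleftrightarrow> (\<exists>U. open U \<and> U \<noteq> {} \<and> (\<forall>i\<in>I. f i ` U \<subseteq> U) \<and>
      (\<forall>i\<in>I. \<forall>j\<in>I. i \<noteq> j \<longrightarrow> f i ` U \<inter> f j ` U = {}) \<and> U \<inter> attractor I f \<noteq> {})"

definition SSC :: "'i set \<Rightarrow> ('i \<Rightarrow> 'a::metric_space \<Rightarrow> 'a) \<Rightarrow> bool" where
  "SSC I g \<longleftrightarrow> (\<forall>i\<in>I. \<forall>j\<in>I. i \<noteq> j \<longrightarrow> g i ` attractor I g \<inter> g j ` attractor I g = {})"

definition invariant_measure :: "'i set \<Rightarrow> ('i \<Rightarrow> 'a::metric_space \<Rightarrow> 'a) \<Rightarrow> ('i \<Rightarrow> real) \<Rightarrow> 'a measure" where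
  "invariant_measure I \<theta> w = (THE \<nu>. prob_space \<nu> \<and> sets \<nu> = sets borel \<and>
     (\<forall>B\<in>sets borel. emeasure \<nu> B = (\<Sum>k\<in>I. ennreal (w k) * emeasure \<nu> (\<theta> k -` B))))"

definition quant_error :: "nat \<Rightarrow> real \<Rightarrow> 'a::real_normed_vector measure \<Rightarrow> ennreal" where
  "quant_error n r \<nu> = (INF A\<in>{A. finite A \<and> A \<noteq> {} \<and> card A \<le> n}.
      \<integral>\<^sup>+ x. ennreal (Min ((\<lambda>a. norm (x - a) powr r) ` A)) \<partial>\<nu>)"

end

theory Submission
  imports Defs
begin


definition lists_of :: "'i set \<Rightarrow> nat \<Rightarrow> 'i list set" where
  "lists_of I n = {\<omega>. length \<omega> = n \<and> set \<omega> \<subseteq> I}"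

lemma lists_of_0[simp]: "lists_of I 0 = {[]}"
  by (auto simp: lists_of_def)

lemma lists_of_Suc: "lists_of I (Suc n) = (\<lambda>(k,\<omega>). k#\<omega>) ` (I \<times> lists_of I n)"
proof -
  have "\<omega> \<in> (\<lambda>(k,\<omega>). k#\<omega>) ` (I \<times> lists_of I n)" if "\<omega> \<in> lists_of I (Suc n)" for \<omega>
    using that by (cases \<omega>) (auto simp: lists_of_def)
  then show ?thesis by (auto simp: lists_of_def)
qed

lemma finite_lists_of: "finite I \<Longrightarrow> finite (lists_of I n)"
  by (induction n) (auto simp: lists_of_Suc)

lemma lists_of_ne: "I \<noteq> {} \<Longrightarrow> lists_of I n \<noteq> {}"
  by (induction n) (auto simp: lists_of_Suc)

lemma sum_lists_of_Suc:
  assumes "finite I"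
  shows "sum f (lists_of I (Suc n)) = (\<Sum>k\<in>I. \<Sum>\<omega>\<in>lists_of I n. f (k#\<omega>))"
proof -
  have "inj_on (\<lambda>(k,\<omega>). k#\<omega>) (I \<times> lists_of I n)" by (auto simp: inj_on_def)
  then have "sum f (lists_of I (Suc n)) = (\<Sum>x\<in>I \<times> lists_of I n. f (case x of (k,\<omega>) \<Rightarrow> k#\<omega>))"
    unfolding lists_of_Suc by (simp add: sum.reindex)
  also have "\<dots> = (\<Sum>k\<in>I. \<Sum>\<omega>\<in>lists_of I n. f (k#\<omega>))"
    by (simp add: sum.cartesian_product split_def)
  finally show ?thesis .
qed

lemma comp_word_Nil[simp]: "comp_word f [] = id"
  by (simp add: comp_word_def)
lemma comp_word_Cons[simp]: "comp_word f (k#\<omega>) = f k \<circ> comp_word f \<omega>"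
  by (simp add: comp_word_def)
lemma comp_word_append: "comp_word f (\<omega> @ \<omega>') = comp_word f \<omega> \<circ> comp_word f \<omega>'"
  by (induction \<omega>) auto
lemma comp_word_cong: "(\<And>k. k \<in> set \<omega> \<Longrightarrow> f k = g k) \<Longrightarrow> comp_word f \<omega> = comp_word g \<omega>"
  by (induction \<omega>) auto

lemma prod_word_Nil[simp]: "prod_word p [] = 1"
  by (simp add: prod_word_def)
lemma prod_word_Cons[simp]: "prod_word p (k#\<omega>) = p k * prod_word p \<omega>"
  by (simp add: prod_word_def)

lemma sum_prod_word:
  assumes "finite I"
  shows "(\<Sum>\<omega>\<in>lists_of I n. prod_word w \<omega>) = (sum w I) ^ n"
proof (induction n)
  case (Suc n)
  show ?case using assms
    by (simp add: sum_lists_of_Suc Suc sum_distrib_left[symmetric] sum_distrib_right[symmetric])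
qed simp

lemma prod_word_pos: "(\<And>k. k \<in> set \<omega> \<Longrightarrow> 0 < w k) \<Longrightarrow> 0 < prod_word w \<omega>"
  by (induction \<omega>) auto

lemma prod_word_le1: "(\<And>k. k \<in> set \<omega> \<Longrightarrow> 0 \<le> w k \<and> w k \<le> 1) \<Longrightarrow> prod_word w \<omega> \<le> 1 \<and> 0 \<le> prod_word w \<omega>"
  by (induction \<omega>) (auto intro: mult_le_one)

lemma prod_word_lt1: "(\<And>k. k \<in> set \<omega> \<Longrightarrow> 0 \<le> w k \<and> w k < 1) \<Longrightarrow> \<omega> \<noteq> [] \<Longrightarrow> prod_word w \<omega> < 1"
proof (induction \<omega>)
  case (Cons a \<omega>)
  have "prod_word w \<omega> \<le> 1" "0 \<le> prod_word w \<omega>" using prod_word_le1[of \<omega> w] Cons.prems by force+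
  moreover have "0 \<le> w a" "w a < 1" using Cons.prems(1)[of a] by auto
  ultimately have "w a * prod_word w \<omega> \<le> w a" by (simp add: mult_left_le)
  then show ?case using \<open>w a < 1\<close> by simp
qed simp

lemma words_eq: "words N m = lists_of {1..N} m"
  by (simp add: words_def lists_of_def)


lemma exists_pow_small:
  fixes L C e :: real
  assumes "0 \<le> L" "L < 1" "0 < e"
  shows "\<exists>n. L ^ n * C < e"
proof -
  have "(\<lambda>n. L ^ n * C) \<longlonglongrightarrow> 0 * C"
    by (intro tendsto_intros) (use assms in auto)
  then have "eventually (\<lambda>n. L ^ n * C < e) sequentially"
    using assms by (intro order_tendstoD(2)) auto
  then show ?thesis by (auto simp: eventually_sequentially)
qed

lemma stake_in_set: "s \<in> streams I \<Longrightarrow> set (stake n s) \<subseteq> I"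
  by (induction n arbitrary: s) (auto dest: streams_shd streams_stl)

locale ifs =
  fixes I :: "'i set" and \<theta> :: "'i \<Rightarrow> 'a::euclidean_space \<Rightarrow> 'a" and L M0 :: real
  assumes finI: "finite I" and neI: "I \<noteq> {}" and L0: "0 \<le> L" and L1: "L < 1"
    and contr: "\<And>k x y. dist (\<theta> k x) (\<theta> k y) \<le> L * dist x y"
    and bnd: "\<And>k. norm (\<theta> k 0) \<le> M0"
begin

lemma cont: "continuous_on S (\<theta> k)"
  by (rule lipschitz_on_continuous_on[of L]) (auto intro!: lipschitz_onI contr L0)

lemma isCont_th: "isCont (\<theta> k) x"
  using cont[of UNIV k] by (simp add: continuous_on_eq_continuous_at)

lemma cont_word: "continuous_on S (comp_word \<theta> \<omega>)"
proof (induction \<omega> arbitrary: S)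
  case (Cons k \<omega>)
  have "continuous_on S (\<theta> k \<circ> comp_word \<theta> \<omega>)" by (rule continuous_on_compose[OF Cons.IH cont])
  then show ?case by simp
qed (simp add: continuous_on_id)

lemma contr_word: "dist (comp_word \<theta> \<omega> x) (comp_word \<theta> \<omega> y) \<le> L ^ length \<omega> * dist x y"
proof (induction \<omega> arbitrary: x y)
  case (Cons k \<omega>)
  have "dist (\<theta> k (comp_word \<theta> \<omega> x)) (\<theta> k (comp_word \<theta> \<omega> y)) \<le> L * dist (comp_word \<theta> \<omega> x) (comp_word \<theta> \<omega> y)"
    by (rule contr)
  also have "\<dots> \<le> L * (L ^ length \<omega> * dist x y)"
    using Cons L0 by (intro mult_left_mono) auto
  finally show ?case by simp
qed simp

lemma M0_nonneg: "0 \<le> M0"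
  using bnd[of undefined] norm_ge_zero[of "\<theta> undefined 0"] by linarith

definition R where "R = M0 / (1 - L)"

lemma R_nonneg: "0 \<le> R"
  using M0_nonneg L1 by (simp add: R_def)

lemma R_eq: "L * R + M0 = R"
  using L1 by (simp add: R_def field_simps)

lemma norm_step: "norm x \<le> R \<Longrightarrow> norm (\<theta> k x) \<le> R"
proof -
  assume x: "norm x \<le> R"
  have "norm (\<theta> k x) \<le> dist (\<theta> k x) (\<theta> k 0) + norm (\<theta> k 0)"
    by (metis dist_0_norm dist_commute dist_triangle)
  also have "\<dots> \<le> L * dist x 0 + M0" using contr[of k x 0] bnd[of k] by (intro add_mono) auto
  also have "\<dots> \<le> L * R + M0" using x L0 by (simp add: mult_left_mono)
  finally show ?thesis using R_eq by simp
qed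

lemma norm_word: "norm x \<le> R \<Longrightarrow> norm (comp_word \<theta> \<omega> x) \<le> R"
  by (induction \<omega>) (auto intro: norm_step)

definition pin :: "nat \<Rightarrow> 'i stream \<Rightarrow> 'a" where "pin n s = comp_word \<theta> (stake n s) 0"
definition cpi :: "'i stream \<Rightarrow> 'a" where "cpi s = lim (\<lambda>n. pin n s)"

lemma pin_dist: "n \<le> m \<Longrightarrow> dist (pin n s) (pin m s) \<le> L^n * R"
proof -
  assume nm: "n \<le> m"
  have e: "stake m s = stake n s @ stake (m - n) (sdrop n s)"
    using stake_add[of n s "m - n"] nm by simp
  have "pin m s = comp_word \<theta> (stake n s) (comp_word \<theta> (stake (m - n) (sdrop n s)) 0)"
    unfolding pin_def e comp_word_append by simp
  then have "dist (pin n s) (pin m s) \<le> L ^ n * dist 0 (comp_word \<theta> (stake (m - n) (sdrop n s)) 0)"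
    using contr_word[of "stake n s" 0] by (simp add: pin_def)
  also have "\<dots> \<le> L ^ n * R"
    using norm_word[of 0] R_nonneg L0 by (intro mult_left_mono) auto
  finally show ?thesis .
qed

lemma pin_Cauchy: "Cauchy (\<lambda>n. pin n s)"
proof (rule CauchyI)
  fix e :: real assume e: "0 < e"
  obtain M where M: "L ^ M * R < e" using exists_pow_small[OF L0 L1 e] by blast
  have "norm (pin m s - pin n s) < e" if "m \<ge> M" "n \<ge> M" for m n
  proof -
    have "dist (pin m s) (pin n s) \<le> L ^ min m n * R"
      using pin_dist[of m n s] pin_dist[of n m s] by (cases "m \<le> n") (auto simp: dist_commute min_def)
    also have "\<dots> \<le> L ^ M * R"
      using that L0 L1 R_nonneg by (intro mult_right_mono power_decreasing) auto
    finally show ?thesis using M by (simp add: dist_norm)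
  qed
  then show "\<exists>M. \<forall>m\<ge>M. \<forall>n\<ge>M. norm (pin m s - pin n s) < e" by blast
qed

lemma pin_lim: "(\<lambda>n. pin n s) \<longlonglongrightarrow> cpi s"
  unfolding cpi_def using pin_Cauchy Cauchy_convergent convergent_LIMSEQ_iff by blast

lemma norm_cpi: "norm (cpi s) \<le> R"
proof (rule LIMSEQ_le_const2)
  show "(\<lambda>n. norm (pin n s)) \<longlonglongrightarrow> norm (cpi s)" by (intro tendsto_intros pin_lim)
  show "\<exists>N. \<forall>n\<ge>N. norm (pin n s) \<le> R" using norm_word[of 0] R_nonneg by (auto simp: pin_def)
qed

lemma cpi_Cons: "cpi (k ## s) = \<theta> k (cpi s)"
proof -
  have "(\<lambda>n. pin (Suc n) (k ## s)) \<longlonglongrightarrow> cpi (k ## s)"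
    using pin_lim by (rule LIMSEQ_Suc)
  moreover have "(\<lambda>n. pin (Suc n) (k ## s)) = (\<lambda>n. \<theta> k (pin n s))"
    by (simp add: pin_def)
  moreover have "(\<lambda>n. \<theta> k (pin n s)) \<longlonglongrightarrow> \<theta> k (cpi s)"
    by (rule isCont_tendsto_compose[OF isCont_th pin_lim])
  ultimately show ?thesis using LIMSEQ_unique by metis
qed

lemma cpi_shift: "cpi s = comp_word \<theta> (stake n s) (cpi (sdrop n s))"
proof (induction n arbitrary: s)
  case (Suc n)
  have "cpi s = cpi (shd s ## stl s)" by simp
  also have "\<dots> = \<theta> (shd s) (cpi (stl s))" by (rule cpi_Cons)
  finally show ?case using Suc[of "stl s"] by simp
qed simp

definition X where "X = cpi ` streams I"
definition A0 where "A0 = closure X"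

lemma X_ne: "X \<noteq> {}"
  using neI sconst_streams[of _ I] unfolding X_def by blast

lemma X_sub: "X \<subseteq> cball 0 R"
  using norm_cpi by (auto simp: X_def)

lemma A0_sub_cball: "A0 \<subseteq> cball 0 R"
  unfolding A0_def using X_sub closure_minimal closed_cball by blast

lemma A0_norm: "x \<in> A0 \<Longrightarrow> norm x \<le> R"
  using A0_sub_cball by auto

lemma A0_dist: "x \<in> A0 \<Longrightarrow> y \<in> A0 \<Longrightarrow> dist x y \<le> 2 * R"
  using A0_norm[of x] A0_norm[of y] norm_triangle_ineq4[of x y] by (simp add: dist_norm)

lemma A0_compact: "compact A0"
  unfolding A0_def using X_sub bounded_cball bounded_subset compact_closure by blast

lemma A0_ne: "A0 \<noteq> {}"
  unfolding A0_def using X_ne by simp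

lemma A0_closed: "closed A0"
  by (simp add: A0_def)

lemma X_inv: "X = (\<Union>k\<in>I. \<theta> k ` X)"
proof
  show "X \<subseteq> (\<Union>k\<in>I. \<theta> k ` X)"
  proof
    fix x assume "x \<in> X"
    then obtain s where s: "s \<in> streams I" "x = cpi s" by (auto simp: X_def)
    have "x = \<theta> (shd s) (cpi (stl s))" using s cpi_Cons[of "shd s" "stl s"] by simp
    moreover have "shd s \<in> I" using streams_shd[OF s(1)] .
    moreover have "cpi (stl s) \<in> X" unfolding X_def using streams_stl[OF s(1)] by (rule imageI)
    ultimately show "x \<in> (\<Union>k\<in>I. \<theta> k ` X)" by blast
  qed
  show "(\<Union>k\<in>I. \<theta> k ` X) \<subseteq> X"
    by (auto simp: X_def cpi_Cons[symmetric] streams_Stream)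
qed

lemma A0_inv: "A0 = (\<Union>k\<in>I. \<theta> k ` A0)"
proof
  have "closed (\<Union>k\<in>I. \<theta> k ` A0)"
    by (intro closed_UN) (auto intro!: compact_imp_closed compact_continuous_image cont A0_compact simp: finI)
  moreover have "X \<subseteq> (\<Union>k\<in>I. \<theta> k ` A0)"
    using X_inv closure_subset[of X] unfolding A0_def by blast
  ultimately show "A0 \<subseteq> (\<Union>k\<in>I. \<theta> k ` A0)"
    unfolding A0_def by (rule closure_minimal[rotated])
  have "\<theta> k ` A0 \<subseteq> A0" if "k \<in> I" for k
    unfolding A0_def
    by (rule image_closure_subset[OF cont closed_closure]) (use X_inv that closure_subset in blast)
  then show "(\<Union>k\<in>I. \<theta> k ` A0) \<subseteq> A0" by blast
qed

lemma word_into: "(\<forall>k\<in>I. \<theta> k ` K \<subseteq> K) \<Longrightarrow> set \<omega> \<subseteq> I \<Longrightarrow> comp_word \<theta> \<omega> ` K \<subseteq> K"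
proof (induction \<omega>)
  case (Cons a \<omega>)
  have "comp_word \<theta> (a#\<omega>) ` K = \<theta> a ` (comp_word \<theta> \<omega> ` K)" by (simp add: image_comp)
  also have "\<dots> \<subseteq> \<theta> a ` K" using Cons by (intro image_mono) auto
  also have "\<dots> \<subseteq> K" using Cons.prems by auto
  finally show ?case .
qed simp

lemma A0_sub: 
  assumes "closed K" "K \<noteq> {}" "\<forall>k\<in>I. \<theta> k ` K \<subseteq> K"
  shows "A0 \<subseteq> K"
proof -
  obtain b where b: "b \<in> K" using assms by auto
  have "cpi s \<in> K" if s: "s \<in> streams I" for s
  proof -
    have "cpi s \<in> closure K"
    proof (unfold closure_approachable, intro allI impI)
      fix e :: real assume e: "e > 0"
      obtain n where n: "L ^ n * (R + norm b) < e" using exists_pow_small[OF L0 L1 e] by blast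
      have "comp_word \<theta> (stake n s) b \<in> K"
        using word_into[OF assms(3) stake_in_set[OF s]] b by blast
      moreover have "dist (comp_word \<theta> (stake n s) b) (cpi s) \<le> L ^ n * (R + norm b)"
      proof -
        have "dist (comp_word \<theta> (stake n s) b) (cpi s) \<le> L ^ n * dist b (cpi (sdrop n s))"
          using contr_word[of "stake n s" b] cpi_shift[of s n] by simp
        also have "\<dots> \<le> L ^ n * (R + norm b)"
          using norm_cpi[of "sdrop n s"] L0 norm_triangle_ineq4[of b "cpi (sdrop n s)"]
          by (intro mult_left_mono) (auto simp: dist_norm)
        finally show ?thesis .
      qed
      ultimately show "\<exists>y\<in>K. dist y (cpi s) < e" using n by force
    qed
    then show ?thesis using assms(1) by simp
  qed
  then have "X \<subseteq> K" by (auto simp: X_def)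
  then show ?thesis unfolding A0_def using assms(1) closure_minimal by blast
qed

lemma iter_mem:
  assumes B: "B \<subseteq> (\<Union>k\<in>I. \<theta> k ` B)"
  shows "x \<in> B \<Longrightarrow> \<exists>\<omega>\<in>lists_of I n. \<exists>y\<in>B. x = comp_word \<theta> \<omega> y"
proof (induction n arbitrary: x)
  case 0 show ?case using 0 by (intro bexI[of _ "[]"]) auto
next
  case (Suc n)
  from Suc.prems B have "x \<in> (\<Union>k\<in>I. \<theta> k ` B)" by (rule subsetD[rotated])
  then obtain k y where ky: "k \<in> I" "y \<in> B" "x = \<theta> k y" by (auto simp only: UN_iff image_iff)
  from Suc.IH[OF ky(2)] obtain \<omega> z where "\<omega> \<in> lists_of I n" "z \<in> B" "y = comp_word \<theta> \<omega> z" by blast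
  then have "k # \<omega> \<in> lists_of I (Suc n)" "z \<in> B" "x = comp_word \<theta> (k # \<omega>) z"
    using ky by (auto simp: lists_of_def)
  then show ?case by blast
qed

lemma A0_into: "k \<in> I \<Longrightarrow> \<theta> k ` A0 \<subseteq> A0"
  using A0_inv by blast

lemma A0_iter: "A0 = (\<Union>\<omega>\<in>lists_of I n. comp_word \<theta> \<omega> ` A0)"
proof
  show "A0 \<subseteq> (\<Union>\<omega>\<in>lists_of I n. comp_word \<theta> \<omega> ` A0)"
  proof
    fix x assume "x \<in> A0"
    from iter_mem[OF equalityD1[OF A0_inv] this, of n] obtain \<omega> y where "\<omega> \<in> lists_of I n" "y \<in> A0" "x = comp_word \<theta> \<omega> y"
      by blast
    then show "x \<in> (\<Union>\<omega>\<in>lists_of I n. comp_word \<theta> \<omega> ` A0)" by blast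
  qed
  show "(\<Union>\<omega>\<in>lists_of I n. comp_word \<theta> \<omega> ` A0) \<subseteq> A0"
    using word_into[of A0] A0_into by (auto simp: lists_of_def)
qed

lemma A0_unique:
  assumes B: "compact B" "B \<noteq> {}" "B = (\<Union>k\<in>I. \<theta> k ` B)"
  shows "B = A0"
proof
  have "(\<Union>k\<in>I. \<theta> k ` B) \<subseteq> B" using B(3) by (rule equalityD2)
  then show "A0 \<subseteq> B" by (intro A0_sub[OF compact_imp_closed[OF B(1)] B(2)]) blast
  obtain Bb where Bb: "\<forall>x\<in>B. norm x \<le> Bb" using compact_imp_bounded[OF B(1)] bounded_iff by blast
  obtain k0 where k0: "k0 \<in> I" using neI by auto
  show "B \<subseteq> A0"
  proof
    fix x assume x: "x \<in> B"
    have "x \<in> closure A0"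
    proof (unfold closure_approachable, intro allI impI)
      fix e :: real assume e: "e > 0"
      obtain n where n: "L ^ n * (Bb + R) < e" using exists_pow_small[OF L0 L1 e] by blast
      obtain \<omega> y where \<omega>: "\<omega> \<in> lists_of I n" "y \<in> B" "x = comp_word \<theta> \<omega> y"
        using iter_mem[OF equalityD1[OF B(3)] x, of n] by blast
      define s where "s = \<omega> @- sconst k0"
      have s: "s \<in> streams I" unfolding s_def
        using \<omega>(1) k0 by (intro shift_streams sconst_streams in_listsI) (auto simp: lists_of_def)
      have "stake n s = \<omega>" using \<omega>(1) by (simp add: s_def stake_shift lists_of_def)
      then have cs: "cpi s = comp_word \<theta> \<omega> (cpi (sdrop n s))" using cpi_shift[of s n] by simp
      have "dist (cpi s) x \<le> L ^ n * dist (cpi (sdrop n s)) y"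
        using contr_word[of \<omega>] \<omega> cs by (auto simp: lists_of_def)
      also have "\<dots> \<le> L ^ n * (Bb + R)"
        using norm_cpi[of "sdrop n s"] L0 Bb \<omega>(2) norm_triangle_ineq4[of "cpi (sdrop n s)" y]
        by (intro mult_left_mono) (auto simp: dist_norm)
      finally have "dist (cpi s) x < e" using n by simp
      have "cpi s \<in> X" unfolding X_def using s by (rule imageI)
      then have "cpi s \<in> A0" unfolding A0_def by (rule subsetD[OF closure_subset])
      moreover note \<open>dist (cpi s) x < e\<close>
      ultimately show "\<exists>y\<in>A0. dist y x < e" by blast
    qed
    then show "x \<in> A0" using A0_closed by simp
  qed
qed

lemma attractor_eq: "attractor I \<theta> = A0"
  unfolding attractor_def
  by (rule the_equality) (intro conjI A0_compact A0_ne A0_inv, elim conjE, erule (2) A0_unique)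

end


lemma open_infdist_less: "open {x. infdist x A < e}"
  by (rule open_Collect_less) (auto intro!: continuous_intros)

lemma closed_Inter_infdist:
  fixes F :: "'a::metric_space set"
  assumes "closed F" "F \<noteq> {}"
  shows "F = (\<Inter>i. {x. infdist x F < inverse (real (Suc i))})"
proof
  show "F \<subseteq> (\<Inter>i. {x. infdist x F < inverse (real (Suc i))})"
    using assms by (auto simp: in_closed_iff_infdist_zero)
  show "(\<Inter>i. {x. infdist x F < inverse (real (Suc i))}) \<subseteq> F"
  proof
    fix x assume x: "x \<in> (\<Inter>i. {x. infdist x F < inverse (real (Suc i))})"
    have "infdist x F = 0"
    proof (rule ccontr)
      assume "infdist x F \<noteq> 0"
      then have "0 < infdist x F" using infdist_nonneg[of x F] by linarith
      then obtain n where n: "n > 0" "inverse (real n) < infdist x F" using ex_inverse_of_nat_less by blast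
      then have "Suc (n - 1) = n" by simp
      with x n show False by (metis (no_types, lifting) INT_iff UNIV_I less_asym mem_Collect_eq)
    qed
    then show "x \<in> F" using assms by (simp add: in_closed_iff_infdist_zero)
  qed
qed

lemma decseq_infdist: "decseq (\<lambda>i. {x. infdist x F < inverse (real (Suc i))})"
  unfolding decseq_def
proof (intro allI impI subsetI)
  fix m n x assume mn: "m \<le> n" and x: "x \<in> {x. infdist x F < inverse (real (Suc n))}"
  have "inverse (real (Suc n)) \<le> inverse (real (Suc m))"
    using mn by (intro le_imp_inverse_le) auto
  then show "x \<in> {x. infdist x F < inverse (real (Suc m))}" using x by (simp only: mem_Collect_eq)
qed

locale wifs = ifs I \<theta> L M0 for I :: "'i::countable set" and \<theta> :: "'i \<Rightarrow> 'a::euclidean_space \<Rightarrow> 'a" and L M0 +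
  fixes w :: "'i \<Rightarrow> real"
  assumes w_pos: "\<And>k. k \<in> I \<Longrightarrow> 0 < w k" and w_sum: "sum w I = 1"
begin

definition wf where "wf k = (if k \<in> I then w k else 0)"

lemma wf_nonneg: "0 \<le> wf k"
  using w_pos by (auto simp: wf_def less_imp_le)

lemma wf_int: "(\<integral>\<^sup>+x. ennreal (wf x) \<partial>count_space UNIV) = 1"
proof -
  have "(\<integral>\<^sup>+x. ennreal (wf x) \<partial>count_space UNIV) = (\<integral>\<^sup>+x. ennreal (w x) * indicator I x \<partial>count_space UNIV)"
    by (intro nn_integral_cong) (auto simp: wf_def)
  also have "\<dots> = (\<integral>\<^sup>+x. ennreal (w x) \<partial>count_space I)"
    by (simp add: nn_integral_count_space_indicator)
  also have "\<dots> = (\<Sum>x\<in>I. ennreal (w x))" using finI by (rule nn_integral_count_space_finite)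
  also have "\<dots> = ennreal (sum w I)" using w_pos by (intro sum_ennreal) (auto intro: less_imp_le)
  finally show ?thesis using w_sum by simp
qed

definition P :: "'i pmf" where "P = embed_pmf wf"

lemma pmf_P: "pmf P k = wf k"
  unfolding P_def using pmf_embed_pmf[OF wf_nonneg wf_int] .

lemma set_P: "set_pmf P \<subseteq> I"
  by (auto simp: set_pmf_eq pmf_P wf_def)

abbreviation SS where "SS \<equiv> stream_space (measure_pmf P)"

lemma prob_SS: "prob_space SS"
  by (rule prob_space.prob_space_stream_space[OF prob_space_measure_pmf])

lemma meas_pin: "pin n \<in> borel_measurable SS"
proof -
  have "stake n \<in> measurable SS (count_space UNIV)"
    using measurable_stake[of n] by (simp add: measurable_cong_sets sets_stream_space_cong sets_measure_pmf_count_space)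
  moreover have "(\<lambda>\<omega>. comp_word \<theta> \<omega> 0) \<in> measurable (count_space UNIV) borel" by simp
  ultimately have "(\<lambda>\<omega>. comp_word \<theta> \<omega> 0) \<circ> stake n \<in> borel_measurable SS"
    by (rule measurable_comp)
  then show ?thesis by (simp add: pin_def[abs_def] o_def)
qed

lemma meas_cpi: "cpi \<in> borel_measurable SS"
  by (rule borel_measurable_LIMSEQ_metric[OF meas_pin pin_lim])

definition mu where "mu = distr SS borel cpi"

lemma prob_mu: "prob_space mu"
  unfolding mu_def by (rule prob_space.prob_space_distr[OF prob_SS meas_cpi])

lemma sets_mu[simp]: "sets mu = sets borel"
  by (simp add: mu_def)

lemma space_mu[simp]: "space mu = UNIV"
  by (simp add: mu_def)

lemma meas_th[measurable]: "\<theta> k \<in> borel_measurable borel"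
  by (rule borel_measurable_continuous_onI[OF cont])

lemma meas_word[measurable]: "comp_word \<theta> \<omega> \<in> borel_measurable borel"
  by (rule borel_measurable_continuous_onI[OF cont_word])

lemma vimage_borel: "B \<in> sets borel \<Longrightarrow> comp_word \<theta> \<omega> -` B \<in> sets borel"
  using measurable_sets[OF meas_word, of B \<omega>] by simp

lemma vimage_borel_th: "B \<in> sets borel \<Longrightarrow> \<theta> k -` B \<in> sets borel"
  using measurable_sets[OF meas_th, of B k] by simp

lemma mu_int:
  assumes f[measurable]: "f \<in> borel_measurable borel"
  shows "(\<integral>\<^sup>+x. f x \<partial>mu) = (\<Sum>k\<in>I. ennreal (w k) * (\<integral>\<^sup>+x. f (\<theta> k x) \<partial>mu))"
proof -
  interpret P: prob_space "measure_pmf P" by (rule prob_space_measure_pmf)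
  have fc[measurable]: "(\<lambda>s. f (cpi s)) \<in> borel_measurable SS"
    using meas_cpi by measurable
  have "(\<integral>\<^sup>+x. f x \<partial>mu) = (\<integral>\<^sup>+s. f (cpi s) \<partial>SS)"
    unfolding mu_def by (simp add: nn_integral_distr meas_cpi)
  also have "\<dots> = (\<integral>\<^sup>+k. (\<integral>\<^sup>+s. f (cpi (k ## s)) \<partial>SS) \<partial>measure_pmf P)"
    by (rule prob_space.nn_integral_stream_space[OF prob_space_measure_pmf fc])
  also have "\<dots> = (\<integral>\<^sup>+k. (\<integral>\<^sup>+x. f (\<theta> k x) \<partial>mu) \<partial>measure_pmf P)"
    unfolding mu_def cpi_Cons by (subst nn_integral_distr) (auto simp: meas_cpi)
  also have "\<dots> = (\<Sum>k\<in>I. (\<integral>\<^sup>+x. f (\<theta> k x) \<partial>mu) * pmf P k)"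
    using set_P finI by (intro nn_integral_measure_pmf_support) auto
  also have "\<dots> = (\<Sum>k\<in>I. ennreal (w k) * (\<integral>\<^sup>+x. f (\<theta> k x) \<partial>mu))"
    by (intro sum.cong) (auto simp: pmf_P wf_def mult.commute)
  finally show ?thesis .
qed

definition inv_pred where
  "inv_pred \<nu> \<longleftrightarrow> prob_space \<nu> \<and> sets \<nu> = sets borel \<and>
     (\<forall>B\<in>sets borel. emeasure \<nu> B = (\<Sum>k\<in>I. ennreal (w k) * emeasure \<nu> (\<theta> k -` B)))"

lemma inv_mu: "inv_pred mu"
proof -
  have "emeasure mu B = (\<Sum>k\<in>I. ennreal (w k) * emeasure mu (\<theta> k -` B))" if B: "B \<in> sets borel" for B
  proof -
    have "emeasure mu B = (\<integral>\<^sup>+x. indicator B x \<partial>mu)" using B by simp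
    also have "\<dots> = (\<Sum>k\<in>I. ennreal (w k) * (\<integral>\<^sup>+x. indicator B (\<theta> k x) \<partial>mu))"
      using B by (intro mu_int) simp
    also have "\<dots> = (\<Sum>k\<in>I. ennreal (w k) * emeasure mu (\<theta> k -` B))"
    proof (intro sum.cong refl arg_cong2[where f="(*)"])
      fix k
      have hk: "\<theta> k -` B \<in> sets borel" using B by (rule vimage_borel_th)
      have "(\<integral>\<^sup>+x. indicator B (\<theta> k x) \<partial>mu) = (\<integral>\<^sup>+x. indicator (\<theta> k -` B) x \<partial>mu)"
        by (simp add: indicator_def)
      also have "\<dots> = emeasure mu (\<theta> k -` B)" using hk by (intro nn_integral_indicator) simp
      finally show "(\<integral>\<^sup>+x. indicator B (\<theta> k x) \<partial>mu) = emeasure mu (\<theta> k -` B)" .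
    qed
    finally show ?thesis .
  qed
  then show ?thesis using prob_mu by (simp add: inv_pred_def)
qed

lemma sum_w_lists: "(\<Sum>\<omega>\<in>lists_of I n. prod_word w \<omega>) = 1"
  using sum_prod_word[OF finI] w_sum by simp

lemma w_word_pos: "\<omega> \<in> lists_of I n \<Longrightarrow> 0 < prod_word w \<omega>"
  by (rule prod_word_pos) (use w_pos in \<open>auto simp: lists_of_def\<close>)


lemma inv_iter:
  assumes nu: "inv_pred \<nu>"
  shows "B \<in> sets borel \<Longrightarrow> emeasure \<nu> B = (\<Sum>\<omega>\<in>lists_of I n. ennreal (prod_word w \<omega>) * emeasure \<nu> (comp_word \<theta> \<omega> -` B))"
proof (induction n arbitrary: B)
  case 0 show ?case by simp
next
  case (Suc n)
  have "emeasure \<nu> B = (\<Sum>k\<in>I. ennreal (w k) * emeasure \<nu> (\<theta> k -` B))"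
    using nu Suc.prems by (auto simp: inv_pred_def)
  also have "\<dots> = (\<Sum>k\<in>I. ennreal (w k) * (\<Sum>\<omega>\<in>lists_of I n. ennreal (prod_word w \<omega>) * emeasure \<nu> (comp_word \<theta> \<omega> -` (\<theta> k -` B))))"
  proof (intro sum.cong refl arg_cong2[where f="(*)"])
    fix k have "\<theta> k -` B \<in> sets borel" using Suc.prems by (rule vimage_borel_th)
    then show "emeasure \<nu> (\<theta> k -` B) = (\<Sum>\<omega>\<in>lists_of I n. ennreal (prod_word w \<omega>) * emeasure \<nu> (comp_word \<theta> \<omega> -` (\<theta> k -` B)))"
      by (rule Suc.IH)
  qed
  also have "\<dots> = (\<Sum>k\<in>I. \<Sum>\<omega>\<in>lists_of I n. ennreal (prod_word w (k#\<omega>)) * emeasure \<nu> (comp_word \<theta> (k#\<omega>) -` B))"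
    apply (intro sum.cong refl)
    apply (subst sum_distrib_left)
    apply (intro sum.cong refl)
    subgoal for k \<omega> using w_pos[of k] w_word_pos[of \<omega> n]
      by (simp add: ennreal_mult mult.assoc vimage_comp less_imp_le)
    done
  also have "\<dots> = (\<Sum>\<omega>\<in>lists_of I (Suc n). ennreal (prod_word w \<omega>) * emeasure \<nu> (comp_word \<theta> \<omega> -` B))"
    by (rule sum_lists_of_Suc[OF finI, symmetric])
  finally show ?case .
qed

lemma inv_iter_real:
  assumes nu: "inv_pred \<nu>" and B: "B \<in> sets borel"
  shows "measure \<nu> B = (\<Sum>\<omega>\<in>lists_of I n. prod_word w \<omega> * measure \<nu> (comp_word \<theta> \<omega> -` B))"
proof -
  interpret prob_space \<nu> using nu by (simp add: inv_pred_def)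
  have nn: "\<omega> \<in> lists_of I n \<Longrightarrow> 0 \<le> prod_word w \<omega>" for \<omega> using w_word_pos[of \<omega> n] by simp
  have "ennreal (measure \<nu> B) = emeasure \<nu> B" by (simp add: emeasure_eq_measure)
  also have "\<dots> = (\<Sum>\<omega>\<in>lists_of I n. ennreal (prod_word w \<omega>) * emeasure \<nu> (comp_word \<theta> \<omega> -` B))"
    by (rule inv_iter[OF nu B])
  also have "\<dots> = (\<Sum>\<omega>\<in>lists_of I n. ennreal (prod_word w \<omega> * measure \<nu> (comp_word \<theta> \<omega> -` B)))"
    using nn by (intro sum.cong refl) (simp add: emeasure_eq_measure ennreal_mult)
  also have "\<dots> = ennreal (\<Sum>\<omega>\<in>lists_of I n. prod_word w \<omega> * measure \<nu> (comp_word \<theta> \<omega> -` B))"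
    using nn by (intro sum_ennreal) auto
  finally show ?thesis
    using nn by (subst (asm) ennreal_inj) (auto intro!: sum_nonneg)
qed

lemma inv_conc:
  assumes nu: "inv_pred \<nu>" shows "measure \<nu> A0 = 1"
proof -
  interpret prob_space \<nu> using nu by (simp add: inv_pred_def)
  have sets: "sets \<nu> = sets borel" using nu by (simp add: inv_pred_def)
  have space: "space \<nu> = UNIV" using sets_eq_imp_space_eq[OF sets] by simp
  define U where "U e = {x. infdist x A0 < e}" for e
  have U_borel: "U e \<in> sets borel" for e unfolding U_def by (rule borel_open[OF open_infdist_less])
  have U1: "measure \<nu> (U e) = 1" if e: "e > 0" for e
  proof -
    obtain a where a: "a \<in> A0" using A0_ne by auto
    have ball_le: "measure \<nu> (cball 0 (real j)) \<le> measure \<nu> (U e)" for j :: nat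
    proof -
      obtain n where n: "L ^ n * (real j + R) < e" using exists_pow_small[OF L0 L1 e] by blast
      have sub: "cball 0 (real j) \<subseteq> comp_word \<theta> \<omega> -` U e" if \<omega>: "\<omega> \<in> lists_of I n" for \<omega>
      proof
        fix y :: 'a assume y: "y \<in> cball 0 (real j)"
        have "comp_word \<theta> \<omega> a \<in> A0" using word_into[of A0 \<omega>] A0_into a \<omega> by (auto simp: lists_of_def)
        then have "infdist (comp_word \<theta> \<omega> y) A0 \<le> dist (comp_word \<theta> \<omega> y) (comp_word \<theta> \<omega> a)" by (rule infdist_le)
        also have "\<dots> \<le> L ^ n * dist y a" using contr_word[of \<omega> y a] \<omega> by (simp add: lists_of_def)
        also have "\<dots> \<le> L ^ n * (real j + R)"
          using y A0_norm[OF a] L0 norm_triangle_ineq4[of y a] by (intro mult_left_mono) (auto simp: dist_norm)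
        finally show "y \<in> comp_word \<theta> \<omega> -` U e" using n by (simp add: U_def)
      qed
      have "measure \<nu> (cball 0 (real j)) = (\<Sum>\<omega>\<in>lists_of I n. prod_word w \<omega> * measure \<nu> (cball 0 (real j)))"
        by (simp add: sum_distrib_right[symmetric] sum_w_lists)
      also have "\<dots> \<le> (\<Sum>\<omega>\<in>lists_of I n. prod_word w \<omega> * measure \<nu> (comp_word \<theta> \<omega> -` U e))"
      proof (intro sum_mono mult_left_mono)
        fix \<omega> assume \<omega>: "\<omega> \<in> lists_of I n"
        show "0 \<le> prod_word w \<omega>" using w_word_pos[OF \<omega>] by simp
        show "measure \<nu> (cball 0 (real j)) \<le> measure \<nu> (comp_word \<theta> \<omega> -` U e)"
          using sub[OF \<omega>] vimage_borel[OF U_borel] sets by (intro finite_measure_mono) auto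
      qed
      also have "\<dots> = measure \<nu> (U e)" by (rule inv_iter_real[OF nu U_borel, symmetric])
      finally show ?thesis .
    qed
    have "(\<lambda>j. measure \<nu> (cball 0 (real j))) \<longlonglongrightarrow> measure \<nu> (\<Union>j. cball 0 (real j))"
      by (rule finite_Lim_measure_incseq) (auto simp: sets incseq_def)
    moreover have "(\<Union>j. cball (0::'a) (real j)) = UNIV"
      by (auto simp: real_arch_simple)
    ultimately have "(\<lambda>j. measure \<nu> (cball 0 (real j))) \<longlonglongrightarrow> 1"
      using prob_space space by simp
    then have "1 \<le> measure \<nu> (U e)" using ball_le by (intro LIMSEQ_le_const2) auto
    then show ?thesis using prob_le_1 by (intro antisym) auto
  qed
  have A0eq: "A0 = (\<Inter>i. U (inverse (real (Suc i))))"
    unfolding U_def by (rule closed_Inter_infdist[OF A0_closed A0_ne])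
  have "(\<lambda>i. measure \<nu> (U (inverse (real (Suc i))))) \<longlonglongrightarrow> measure \<nu> (\<Inter>i. U (inverse (real (Suc i))))"
    by (rule finite_Lim_measure_decseq) (use U_borel sets decseq_infdist in \<open>auto simp: U_def\<close>)
  then have "(\<lambda>i. 1) \<longlonglongrightarrow> measure \<nu> A0" using U1 A0eq by simp
  then show ?thesis using LIMSEQ_unique tendsto_const by metis
qed

lemma closed_le:
  assumes n1: "inv_pred \<nu>1" and n2: "inv_pred \<nu>2" and F: "closed F"
  shows "measure \<nu>1 F \<le> measure \<nu>2 F"
proof (cases "F = {}")
  case True then show ?thesis by simp
next
  case False
  interpret N1: prob_space \<nu>1 using n1 by (simp add: inv_pred_def)
  interpret N2: prob_space \<nu>2 using n2 by (simp add: inv_pred_def)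
  have sets1: "sets \<nu>1 = sets borel" using n1 by (simp add: inv_pred_def)
  have sets2: "sets \<nu>2 = sets borel" using n2 by (simp add: inv_pred_def)
  have space1: "space \<nu>1 = UNIV" using sets_eq_imp_space_eq[OF sets1] by simp
  have Fb: "F \<in> sets borel" using F by (rule borel_closed)
  define U where "U d = {x. infdist x F < d}" for d
  have U_borel: "U d \<in> sets borel" for d unfolding U_def by (rule borel_open[OF open_infdist_less])
  have key: "measure \<nu>1 F \<le> measure \<nu>2 (U d)" if d: "d > 0" for d
  proof -
    obtain n where n: "L ^ n * (2 * R) < d" using exists_pow_small[OF L0 L1 d] by blast
    define c where "c \<omega> = (if comp_word \<theta> \<omega> ` A0 \<inter> F = {} then 0 else (1::real))" for \<omega>
    have c1: "measure \<nu>1 (comp_word \<theta> \<omega> -` F) \<le> c \<omega>" for \<omega>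
    proof (cases "comp_word \<theta> \<omega> ` A0 \<inter> F = {}")
      case True
      then have "comp_word \<theta> \<omega> -` F \<subseteq> space \<nu>1 - A0" using space1 by auto
      then have "measure \<nu>1 (comp_word \<theta> \<omega> -` F) \<le> measure \<nu>1 (space \<nu>1 - A0)"
        using sets1 vimage_borel[OF Fb] A0_closed by (intro N1.finite_measure_mono) auto
      also have "\<dots> = 0" using N1.prob_compl[of A0] inv_conc[OF n1] sets1 A0_closed by simp
      finally show ?thesis using True by (simp add: c_def)
    next
      case False then show ?thesis using N1.prob_le_1 by (simp add: c_def)
    qed
    have c2: "c \<omega> \<le> measure \<nu>2 (comp_word \<theta> \<omega> -` U d)" if \<omega>: "\<omega> \<in> lists_of I n" for \<omega>
    proof (cases "comp_word \<theta> \<omega> ` A0 \<inter> F = {}")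
      case True then show ?thesis by (simp add: c_def)
    next
      case False
      then obtain a0 where a0: "a0 \<in> A0" "comp_word \<theta> \<omega> a0 \<in> F" by auto
      have "A0 \<subseteq> comp_word \<theta> \<omega> -` U d"
      proof
        fix a assume a: "a \<in> A0"
        have "infdist (comp_word \<theta> \<omega> a) F \<le> dist (comp_word \<theta> \<omega> a) (comp_word \<theta> \<omega> a0)"
          using a0(2) by (rule infdist_le)
        also have "\<dots> \<le> L ^ n * dist a a0" using contr_word[of \<omega> a a0] \<omega> by (simp add: lists_of_def)
        also have "\<dots> \<le> L ^ n * (2 * R)" using A0_dist[OF a a0(1)] L0 by (intro mult_left_mono) auto
        finally show "a \<in> comp_word \<theta> \<omega> -` U d" using n by (simp add: U_def)
      qed
      then have "measure \<nu>2 A0 \<le> measure \<nu>2 (comp_word \<theta> \<omega> -` U d)"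
        using sets2 vimage_borel[OF U_borel] by (intro N2.finite_measure_mono) auto
      then show ?thesis using inv_conc[OF n2] False by (simp add: c_def)
    qed
    have "measure \<nu>1 F = (\<Sum>\<omega>\<in>lists_of I n. prod_word w \<omega> * measure \<nu>1 (comp_word \<theta> \<omega> -` F))"
      by (rule inv_iter_real[OF n1 Fb])
    also have "\<dots> \<le> (\<Sum>\<omega>\<in>lists_of I n. prod_word w \<omega> * c \<omega>)"
      using c1 w_word_pos by (intro sum_mono mult_left_mono) (auto intro: less_imp_le)
    also have "\<dots> \<le> (\<Sum>\<omega>\<in>lists_of I n. prod_word w \<omega> * measure \<nu>2 (comp_word \<theta> \<omega> -` U d))"
      using c2 w_word_pos by (intro sum_mono mult_left_mono) (auto intro: less_imp_le)
    also have "\<dots> = measure \<nu>2 (U d)" by (rule inv_iter_real[OF n2 U_borel, symmetric])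
    finally show ?thesis .
  qed
  have Feq: "F = (\<Inter>i. U (inverse (real (Suc i))))"
    unfolding U_def by (rule closed_Inter_infdist[OF F False])
  have "(\<lambda>i. measure \<nu>2 (U (inverse (real (Suc i))))) \<longlonglongrightarrow> measure \<nu>2 (\<Inter>i. U (inverse (real (Suc i))))"
    by (rule N2.finite_Lim_measure_decseq) (use U_borel sets2 decseq_infdist in \<open>auto simp: U_def\<close>)
  then have "(\<lambda>i. measure \<nu>2 (U (inverse (real (Suc i))))) \<longlonglongrightarrow> measure \<nu>2 F" using Feq by simp
  then show ?thesis using key by (intro LIMSEQ_le_const) auto
qed

lemma inv_unique:
  assumes nu: "inv_pred \<nu>" shows "\<nu> = mu"
proof -
  interpret N: prob_space \<nu> using nu by (simp add: inv_pred_def)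
  interpret M: prob_space mu by (rule prob_mu)
  have sets: "sets \<nu> = sets borel" using nu by (simp add: inv_pred_def)
  show ?thesis
  proof (rule measure_eqI_generator_eq[where E="Collect closed" and \<Omega>=UNIV and A="\<lambda>_. UNIV"])
    show "Int_stable (Collect closed)" by (auto simp: Int_stable_def)
    show "Collect closed \<subseteq> Pow UNIV" by auto
    fix X :: "'a set" assume "X \<in> Collect closed"
    then have X: "closed X" by simp
    have "measure \<nu> X = measure mu X"
      using closed_le[OF nu inv_mu X] closed_le[OF inv_mu nu X] by simp
    then show "emeasure \<nu> X = emeasure mu X" by (simp add: N.emeasure_eq_measure M.emeasure_eq_measure)
  next
    show "sets \<nu> = sigma_sets UNIV (Collect closed)" using sets by (simp add: borel_eq_closed)
    show "sets mu = sigma_sets UNIV (Collect closed)" by (simp add: borel_eq_closed)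
  qed (auto simp: N.emeasure_eq_measure)
qed

lemma invariant_measure_eq: "invariant_measure I \<theta> w = mu"
  unfolding invariant_measure_def
proof (rule the_equality)
  show "prob_space mu \<and> sets mu = sets borel \<and>
     (\<forall>B\<in>sets borel. emeasure mu B = (\<Sum>k\<in>I. ennreal (w k) * emeasure mu (\<theta> k -` B)))"
    using inv_mu by (simp add: inv_pred_def)
  fix \<nu> assume "prob_space \<nu> \<and> sets \<nu> = sets borel \<and>
     (\<forall>B\<in>sets borel. emeasure \<nu> B = (\<Sum>k\<in>I. ennreal (w k) * emeasure \<nu> (\<theta> k -` B)))"
  then have "inv_pred \<nu>" by (simp add: inv_pred_def)
  then show "\<nu> = mu" by (rule inv_unique)
qed

end


definition qE :: "real \<Rightarrow> 'a::real_normed_vector measure \<Rightarrow> 'a set \<Rightarrow> ennreal" where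
  "qE r \<nu> \<alpha> = (\<integral>\<^sup>+ x. ennreal (Min ((\<lambda>a. norm (x - a) powr r) ` \<alpha>)) \<partial>\<nu>)"

lemma quant_error_qE: "quant_error n r \<nu> = (INF \<alpha>\<in>{\<alpha>. finite \<alpha> \<and> \<alpha> \<noteq> {} \<and> card \<alpha> \<le> n}. qE r \<nu> \<alpha>)"
  by (simp add: quant_error_def qE_def)

lemma quant_error_le: "finite \<alpha> \<Longrightarrow> \<alpha> \<noteq> {} \<Longrightarrow> card \<alpha> \<le> n \<Longrightarrow> quant_error n r \<nu> \<le> qE r \<nu> \<alpha>"
  unfolding quant_error_qE by (rule INF_lower) auto

lemma Min_powr_eq:
  fixes x :: "'a::real_normed_vector"
  assumes "finite \<alpha>" "\<alpha> \<noteq> {}" "r > 0"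
  shows "\<exists>a\<in>\<alpha>. Min ((\<lambda>a. norm (x - a) powr r) ` \<alpha>) = norm (x - a) powr r \<and> (\<forall>b\<in>\<alpha>. norm (x - a) \<le> norm (x - b))"
proof -
  let ?m = "Min ((\<lambda>b. norm (x - b)) ` \<alpha>)"
  have "?m \<in> (\<lambda>b. norm (x - b)) ` \<alpha>" using assms by (intro Min_in) auto
  then obtain a where a: "a \<in> \<alpha>" "norm (x - a) = ?m" by auto
  have le: "\<forall>b\<in>\<alpha>. norm (x - a) \<le> norm (x - b)" using a assms by auto
  have "Min ((\<lambda>a. norm (x - a) powr r) ` \<alpha>) = norm (x - a) powr r"
  proof (rule Min_eqI)
    show "finite ((\<lambda>a. norm (x - a) powr r) ` \<alpha>)" using assms by simp
    show "norm (x - a) powr r \<in> (\<lambda>a. norm (x - a) powr r) ` \<alpha>" using a(1) by blast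
    fix y assume "y \<in> (\<lambda>a. norm (x - a) powr r) ` \<alpha>"
    then obtain b where "b \<in> \<alpha>" "y = norm (x - b) powr r" by blast
    then show "norm (x - a) powr r \<le> y" using le assms by (auto intro!: powr_mono2)
  qed
  then show ?thesis using a le by blast
qed

lemma Min_powr_le:
  fixes x :: "'a::real_normed_vector"
  assumes "finite \<alpha>" "b \<in> \<alpha>"
  shows "Min ((\<lambda>a. norm (x - a) powr r) ` \<alpha>) \<le> norm (x - b) powr r"
  using assms by (intro Min_le) auto

lemma Min_powr_nonneg:
  fixes x :: "'a::real_normed_vector"
  assumes "finite \<alpha>" "\<alpha> \<noteq> {}"
  shows "0 \<le> Min ((\<lambda>a. norm (x - a) powr r) ` \<alpha>)"
  using assms by simp

lemma meas_Min_powr[measurable]: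
  fixes \<alpha> :: "'a::euclidean_space set"
  assumes "finite \<alpha>"
  shows "(\<lambda>x. ennreal (Min ((\<lambda>a. norm (x - a) powr r) ` \<alpha>))) \<in> borel_measurable borel"
proof -
  have "(\<lambda>x. Min ((\<lambda>a. norm (x - a) powr r) ` \<alpha>)) \<in> borel_measurable borel"
    using assms by (intro borel_measurable_Min) auto
  then show ?thesis by measurable
qed

locale qifs = wifs I \<theta> L M0 w for I :: "'i::countable set" and \<theta> :: "'i \<Rightarrow> 'a::euclidean_space \<Rightarrow> 'a" and L M0 w +
  fixes Sf :: "'i \<Rightarrow> real"
  assumes S_pos: "\<And>k. k \<in> I \<Longrightarrow> 0 < Sf k"
    and S_low: "\<And>k x y. k \<in> I \<Longrightarrow> Sf k * dist x y \<le> dist (\<theta> k x) (\<theta> k y)"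
    and th_surj: "\<And>k. k \<in> I \<Longrightarrow> surj (\<theta> k)"
    and sep: "\<And>k k'. k \<in> I \<Longrightarrow> k' \<in> I \<Longrightarrow> k \<noteq> k' \<Longrightarrow> \<theta> k ` A0 \<inter> \<theta> k' ` A0 = {}"
begin

lemma AE_A0: "AE x in mu. x \<in> A0"
  using prob_space.AE_prob_1[OF prob_mu inv_conc[OF inv_mu]] .

lemma exists_delta: "\<exists>\<delta>>0. \<forall>k\<in>I. \<forall>k'\<in>I. k \<noteq> k' \<longrightarrow> (\<forall>y\<in>A0. \<forall>y'\<in>A0. \<delta> \<le> dist (\<theta> k y) (\<theta> k' y'))"
proof -
  have "\<exists>d>0. \<forall>x\<in>\<theta> k ` A0. \<forall>y\<in>(\<Union>k'\<in>I-{k}. \<theta> k' ` A0). d \<le> dist x y" if k: "k \<in> I" for k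
  proof (rule separate_compact_closed)
    show "compact (\<theta> k ` A0)" by (intro compact_continuous_image cont A0_compact)
    show "closed (\<Union>k'\<in>I-{k}. \<theta> k' ` A0)"
      by (intro closed_UN) (auto intro!: compact_imp_closed compact_continuous_image cont A0_compact simp: finI)
    show "\<theta> k ` A0 \<inter> (\<Union>k'\<in>I-{k}. \<theta> k' ` A0) = {}" using sep k by blast
  qed
  then obtain d where d: "\<And>k. k \<in> I \<Longrightarrow> d k > 0 \<and> (\<forall>x\<in>\<theta> k ` A0. \<forall>y\<in>(\<Union>k'\<in>I-{k}. \<theta> k' ` A0). d k \<le> dist x y)"
    by metis
  define \<delta> where "\<delta> = Min (d ` I)"
  have "\<delta> > 0" using d finI neI by (simp add: \<delta>_def)
  moreover have "\<delta> \<le> dist (\<theta> k y) (\<theta> k' y')" if "k \<in> I" "k' \<in> I" "k \<noteq> k'" "y \<in> A0" "y' \<in> A0" for k k' y y'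
  proof -
    have "\<delta> \<le> d k" using that finI by (simp add: \<delta>_def)
    also have "d k \<le> dist (\<theta> k y) (\<theta> k' y')" using d[of k] that by blast
    finally show ?thesis .
  qed
  ultimately show ?thesis by blast
qed

end


context qifs begin

lemma meas_mu: "f \<in> borel_measurable borel \<Longrightarrow> f \<in> borel_measurable mu"
  by (simp add: measurable_cong_sets[OF sets_mu refl])

definition dl where "dl = (SOME \<delta>. \<delta>>0 \<and> (\<forall>k\<in>I. \<forall>k'\<in>I. k \<noteq> k' \<longrightarrow> (\<forall>y\<in>A0. \<forall>y'\<in>A0. \<delta> \<le> dist (\<theta> k y) (\<theta> k' y'))))"

lemma dl_prop: "dl>0 \<and> (\<forall>k\<in>I. \<forall>k'\<in>I. k \<noteq> k' \<longrightarrow> (\<forall>y\<in>A0. \<forall>y'\<in>A0. dl \<le> dist (\<theta> k y) (\<theta> k' y')))"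
  unfolding dl_def by (rule someI_ex[OF exists_delta])

lemma dl_pos: "dl > 0" using dl_prop by blast

lemma dl_sep: "k\<in>I \<Longrightarrow> k'\<in>I \<Longrightarrow> k\<noteq>k' \<Longrightarrow> y\<in>A0 \<Longrightarrow> y'\<in>A0 \<Longrightarrow> dl \<le> dist (\<theta> k y) (\<theta> k' y')"
  using dl_prop by blast

definition ak where "ak \<alpha> k = {a\<in>\<alpha>. \<exists>y\<in>A0. dist (\<theta> k y) a < dl/2}"

lemma ak_sub: "ak \<alpha> k \<subseteq> \<alpha>" by (auto simp: ak_def)

lemma ak_disj: "k\<in>I \<Longrightarrow> k'\<in>I \<Longrightarrow> k\<noteq>k' \<Longrightarrow> ak \<alpha> k \<inter> ak \<alpha> k' = {}"
proof (rule ccontr)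
  assume k: "k\<in>I" "k'\<in>I" "k\<noteq>k'" and "ak \<alpha> k \<inter> ak \<alpha> k' \<noteq> {}"
  then obtain a y y' where a: "y \<in> A0" "y' \<in> A0" "dist (\<theta> k y) a < dl/2" "dist (\<theta> k' y') a < dl/2"
    by (auto simp: ak_def)
  have "dist (\<theta> k y) (\<theta> k' y') \<le> dist (\<theta> k y) a + dist (\<theta> k' y') a" by (rule dist_triangle2)
  also have "\<dots> < dl" using a by simp
  finally show False using dl_sep[OF k a(1,2)] by simp
qed

lemma sum_ak: "finite \<alpha> \<Longrightarrow> (\<Sum>k\<in>I. card (ak \<alpha> k)) \<le> card \<alpha>"
proof -
  assume fin: "finite \<alpha>"
  have "(\<Sum>k\<in>I. card (ak \<alpha> k)) = card (\<Union>k\<in>I. ak \<alpha> k)"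
    using fin ak_disj by (intro card_UN_disjoint[symmetric] finI) (auto intro: finite_subset[OF ak_sub])
  also have "\<dots> \<le> card \<alpha>" using fin ak_sub by (intro card_mono) auto
  finally show ?thesis .
qed

lemma core:
  assumes r: "r > 0" and \<alpha>: "finite \<alpha>" "\<alpha> \<noteq> {}" and cov: "\<forall>x\<in>A0. \<exists>a\<in>\<alpha>. dist x a < dl/2"
  shows "(\<Sum>k\<in>I. ennreal (w k * Sf k powr r) * quant_error (card (ak \<alpha> k)) r mu) \<le> qE r mu \<alpha>"
proof -
  have each: "ennreal (Sf k powr r) * quant_error (card (ak \<alpha> k)) r mu
      \<le> (\<integral>\<^sup>+x. ennreal (Min ((\<lambda>a. norm (\<theta> k x - a) powr r) ` \<alpha>)) \<partial>mu)" if k: "k \<in> I" for k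
  proof -
    define \<beta> where "\<beta> = (\<lambda>a. inv (\<theta> k) a) ` ak \<alpha> k"
    have finak: "finite (ak \<alpha> k)" using \<alpha> ak_sub finite_subset by blast
    obtain y0 where y0: "y0 \<in> A0" using A0_ne by auto
    have "\<theta> k y0 \<in> A0" using A0_into[OF k] y0 by auto
    then obtain a0 where "a0 \<in> \<alpha>" "dist (\<theta> k y0) a0 < dl/2" using cov by blast
    then have "a0 \<in> ak \<alpha> k" using y0 by (auto simp: ak_def)
    then have \<beta>ne: "\<beta> \<noteq> {}" by (auto simp: \<beta>_def)
    have \<beta>fin: "finite \<beta>" using finak by (simp add: \<beta>_def)
    have \<beta>card: "card \<beta> \<le> card (ak \<alpha> k)" unfolding \<beta>_def by (rule card_image_le[OF finak])
    have "quant_error (card (ak \<alpha> k)) r mu \<le> qE r mu \<beta>" by (rule quant_error_le[OF \<beta>fin \<beta>ne \<beta>card])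
    then have "ennreal (Sf k powr r) * quant_error (card (ak \<alpha> k)) r mu \<le> ennreal (Sf k powr r) * qE r mu \<beta>"
      by (rule mult_left_mono) simp
    also have "\<dots> = (\<integral>\<^sup>+x. ennreal (Sf k powr r) * ennreal (Min ((\<lambda>b. norm (x - b) powr r) ` \<beta>)) \<partial>mu)"
      unfolding qE_def by (rule nn_integral_cmult[symmetric]) (rule meas_mu[OF meas_Min_powr[OF \<beta>fin]])
    also have "\<dots> \<le> (\<integral>\<^sup>+x. ennreal (Min ((\<lambda>a. norm (\<theta> k x - a) powr r) ` \<alpha>)) \<partial>mu)"
    proof (rule nn_integral_mono_AE)
      show "AE x in mu. ennreal (Sf k powr r) * ennreal (Min ((\<lambda>b. norm (x - b) powr r) ` \<beta>))
               \<le> ennreal (Min ((\<lambda>a. norm (\<theta> k x - a) powr r) ` \<alpha>))"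
        using AE_A0
      proof eventually_elim
        fix x assume x: "x \<in> A0"
        have z: "\<theta> k x \<in> A0" using A0_into[OF k] x by auto
        obtain a where a: "a \<in> \<alpha>" "Min ((\<lambda>a. norm (\<theta> k x - a) powr r) ` \<alpha>) = norm (\<theta> k x - a) powr r"
             "\<forall>b\<in>\<alpha>. norm (\<theta> k x - a) \<le> norm (\<theta> k x - b)"
          using Min_powr_eq[OF \<alpha> r, of "\<theta> k x"] by blast
        obtain a1 where a1: "a1 \<in> \<alpha>" "dist (\<theta> k x) a1 < dl/2" using cov z by blast
        have "norm (\<theta> k x - a) \<le> norm (\<theta> k x - a1)" using a(3) a1(1) by blast
        then have "norm (\<theta> k x - a) < dl/2" using a1(2) by (simp add: dist_norm)
        then have aak: "a \<in> ak \<alpha> k" using a(1) x by (auto simp: ak_def dist_norm)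
        define b where "b = inv (\<theta> k) a"
        have b: "b \<in> \<beta>" using aak by (simp add: \<beta>_def b_def)
        have tb: "\<theta> k b = a" using surj_f_inv_f[OF th_surj[OF k]] by (simp add: b_def)
        have Sb: "Sf k * norm (x - b) \<le> norm (\<theta> k x - a)" using S_low[OF k, of x b] tb by (simp add: dist_norm)
        have Sp: "0 < Sf k" using S_pos[OF k] .
        have "Sf k powr r * Min ((\<lambda>b. norm (x - b) powr r) ` \<beta>) \<le> Sf k powr r * norm (x - b) powr r"
          using Min_powr_le[OF \<beta>fin b] by (intro mult_left_mono) auto
        also have "\<dots> = (Sf k * norm (x - b)) powr r" using Sp by (simp add: powr_mult)
        also have "\<dots> \<le> norm (\<theta> k x - a) powr r" using Sp r Sb by (intro powr_mono2) auto
        also have "\<dots> = Min ((\<lambda>a. norm (\<theta> k x - a) powr r) ` \<alpha>)" using a(2) by simp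
        finally have le: "Sf k powr r * Min ((\<lambda>b. norm (x - b) powr r) ` \<beta>) \<le> Min ((\<lambda>a. norm (\<theta> k x - a) powr r) ` \<alpha>)" .
        have "ennreal (Sf k powr r) * ennreal (Min ((\<lambda>b. norm (x - b) powr r) ` \<beta>)) = ennreal (Sf k powr r * Min ((\<lambda>b. norm (x - b) powr r) ` \<beta>))"
          using Min_powr_nonneg[OF \<beta>fin \<beta>ne, of x r] by (simp add: ennreal_mult)
        then show "ennreal (Sf k powr r) * ennreal (Min ((\<lambda>b. norm (x - b) powr r) ` \<beta>)) \<le> ennreal (Min ((\<lambda>a. norm (\<theta> k x - a) powr r) ` \<alpha>))"
          using le by (simp add: ennreal_leI)
      qed
    qed
    finally show ?thesis .
  qed
  have "(\<Sum>k\<in>I. ennreal (w k * Sf k powr r) * quant_error (card (ak \<alpha> k)) r mu)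
      = (\<Sum>k\<in>I. ennreal (w k) * (ennreal (Sf k powr r) * quant_error (card (ak \<alpha> k)) r mu))"
    using w_pos by (intro sum.cong refl) (simp add: ennreal_mult less_imp_le mult.assoc)
  also have "\<dots> \<le> (\<Sum>k\<in>I. ennreal (w k) * (\<integral>\<^sup>+x. ennreal (Min ((\<lambda>a. norm (\<theta> k x - a) powr r) ` \<alpha>)) \<partial>mu))"
    using each by (intro sum_mono mult_left_mono) auto
  also have "\<dots> = qE r mu \<alpha>"
    unfolding qE_def by (rule mu_int[OF meas_Min_powr[OF \<alpha>(1)], symmetric])
  finally show ?thesis .
qed

end


context qifs begin

definition n3 where "n3 = (SOME n. L ^ n * (2 * R) < dl / 4)"

lemma n3: "L ^ n3 * (2 * R) < dl / 4"
  unfolding n3_def by (rule someI_ex) (rule exists_pow_small[OF L0 L1], use dl_pos in simp)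

definition rho' where "rho' = Min (prod_word w ` lists_of I n3)"

lemma rho'_pos: "rho' > 0"
  unfolding rho'_def using finite_lists_of[OF finI] lists_of_ne[OF neI] w_word_pos by simp

lemma rho'_le: "\<omega> \<in> lists_of I n3 \<Longrightarrow> rho' \<le> prod_word w \<omega>"
  unfolding rho'_def using finite_lists_of[OF finI] by simp

lemma uncovered:
  assumes r: "r > 0" and \<alpha>: "finite \<alpha>" "\<alpha> \<noteq> {}" and x: "x \<in> A0" "\<forall>a\<in>\<alpha>. dl/2 \<le> dist x a"
  shows "ennreal ((dl/4) powr r * rho') \<le> qE r mu \<alpha>"
proof -
  interpret M: prob_space mu by (rule prob_mu)
  have "A0 \<subseteq> (\<Union>\<omega>\<in>lists_of I n3. comp_word \<theta> \<omega> ` A0)" by (rule equalityD1[OF A0_iter])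
  then obtain \<omega> y where \<omega>: "\<omega> \<in> lists_of I n3" "y \<in> A0" "x = comp_word \<theta> \<omega> y" using x(1) by blast
  define G where "G = (\<Inter>a\<in>\<alpha>. {z. dl/4 \<le> dist z a})"
  have G_closed: "closed G" unfolding G_def
    by (intro closed_INT ballI closed_Collect_le) (auto intro!: continuous_intros)
  have Gb: "G \<in> sets borel" by (rule borel_closed[OF G_closed])
  have sub: "A0 \<subseteq> comp_word \<theta> \<omega> -` G"
  proof
    fix z assume z: "z \<in> A0"
    have "dist (comp_word \<theta> \<omega> z) x \<le> L ^ n3 * dist z y"
      using contr_word[of \<omega> z y] \<omega> by (simp add: lists_of_def)
    also have "\<dots> \<le> L ^ n3 * (2 * R)" using A0_dist[OF z \<omega>(2)] L0 by (intro mult_left_mono) auto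
    finally have d: "dist (comp_word \<theta> \<omega> z) x < dl / 4" using n3 by simp
    have "dl/4 \<le> dist (comp_word \<theta> \<omega> z) a" if a: "a \<in> \<alpha>" for a
    proof -
      have "dl/2 \<le> dist x a" using x(2) a by blast
      also have "\<dots> \<le> dist x (comp_word \<theta> \<omega> z) + dist (comp_word \<theta> \<omega> z) a" by (rule dist_triangle)
      finally show ?thesis using d by (simp add: dist_commute)
    qed
    then show "z \<in> comp_word \<theta> \<omega> -` G" by (simp add: G_def)
  qed
  have "rho' \<le> measure mu G"
  proof -
    have "measure mu A0 \<le> measure mu (comp_word \<theta> \<omega> -` G)"
      using sub vimage_borel[OF Gb] by (intro M.finite_measure_mono) auto
    then have m1: "1 \<le> measure mu (comp_word \<theta> \<omega> -` G)" using inv_conc[OF inv_mu] by simp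
    have "rho' \<le> prod_word w \<omega>" by (rule rho'_le[OF \<omega>(1)])
    also have "\<dots> \<le> prod_word w \<omega> * measure mu (comp_word \<theta> \<omega> -` G)"
      using m1 w_word_pos[OF \<omega>(1)] by (simp add: mult_le_cancel_left1)
    also have "\<dots> \<le> (\<Sum>\<omega>'\<in>lists_of I n3. prod_word w \<omega>' * measure mu (comp_word \<theta> \<omega>' -` G))"
      using \<omega>(1) finite_lists_of[OF finI]
      by (intro member_le_sum) (auto intro!: mult_nonneg_nonneg[OF less_imp_le[OF w_word_pos]])
    also have "\<dots> = measure mu G" by (rule inv_iter_real[OF inv_mu Gb, symmetric])
    finally show ?thesis .
  qed
  have "ennreal ((dl/4) powr r) * emeasure mu G \<le> qE r mu \<alpha>"
  proof -
    have "ennreal ((dl/4) powr r) * emeasure mu G = (\<integral>\<^sup>+z. ennreal ((dl/4) powr r) * indicator G z \<partial>mu)"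
      using Gb by (intro nn_integral_cmult_indicator[symmetric]) simp
    also have "\<dots> \<le> qE r mu \<alpha>"
      unfolding qE_def
    proof (rule nn_integral_mono)
      fix z
      show "ennreal ((dl/4) powr r) * indicator G z \<le> ennreal (Min ((\<lambda>a. norm (z - a) powr r) ` \<alpha>))"
      proof (cases "z \<in> G")
        case True
        have "(dl/4) powr r \<le> Min ((\<lambda>a. norm (z - a) powr r) ` \<alpha>)"
          using True \<alpha> r dl_pos by (auto simp: G_def dist_norm intro!: powr_mono2)
        then show ?thesis using True by (simp add: ennreal_leI)
      qed simp
    qed
    finally show ?thesis .
  qed
  moreover have "ennreal ((dl/4) powr r * rho') \<le> ennreal ((dl/4) powr r) * emeasure mu G"
    using \<open>rho' \<le> measure mu G\<close> rho'_pos
    by (simp add: M.emeasure_eq_measure ennreal_mult[symmetric] ennreal_leI mult_left_mono)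
  ultimately show ?thesis by (rule order_trans[rotated])
qed

lemma small_quant:
  assumes r: "r > 0"
  shows "\<exists>n0. \<forall>n\<ge>n0. quant_error n r mu < ennreal ((dl/4) powr r * rho')"
proof -
  interpret M: prob_space mu by (rule prob_mu)
  define \<rho> where "\<rho> = (dl/4) powr r * rho'"
  have \<rho>: "\<rho> > 0" using dl_pos rho'_pos by (simp add: \<rho>_def)
  obtain k where k: "L ^ k * (2 * R) < \<rho> powr (1/r)"
    using exists_pow_small[OF L0 L1, of "\<rho> powr (1/r)" "2*R"] \<rho> by auto
  define t where "t = L ^ k * (2 * R)"
  have t0: "0 \<le> t" using L0 R_nonneg by (simp add: t_def)
  have "t powr r < (\<rho> powr (1/r)) powr r" using k t0 r by (intro powr_less_mono2) (auto simp: t_def)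
  also have "\<dots> = \<rho>" using r \<rho> by (simp add: powr_powr)
  finally have tr: "t powr r < \<rho>" .
  obtain x0 where x0: "x0 \<in> A0" using A0_ne by auto
  define \<alpha>0 where "\<alpha>0 = (\<lambda>\<omega>. comp_word \<theta> \<omega> x0) ` lists_of I k"
  have fin0: "finite \<alpha>0" using finite_lists_of[OF finI] by (simp add: \<alpha>0_def)
  have ne0: "\<alpha>0 \<noteq> {}" using lists_of_ne[OF neI] by (simp add: \<alpha>0_def)
  have "qE r mu \<alpha>0 \<le> (\<integral>\<^sup>+z. ennreal (t powr r) \<partial>mu)"
    unfolding qE_def
  proof (rule nn_integral_mono_AE)
    show "AE z in mu. ennreal (Min ((\<lambda>a. norm (z - a) powr r) ` \<alpha>0)) \<le> ennreal (t powr r)"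
      using AE_A0
    proof eventually_elim
      fix z assume z: "z \<in> A0"
      have "A0 \<subseteq> (\<Union>\<omega>\<in>lists_of I k. comp_word \<theta> \<omega> ` A0)" by (rule equalityD1[OF A0_iter])
      then obtain \<omega> y where \<omega>: "\<omega> \<in> lists_of I k" "y \<in> A0" "z = comp_word \<theta> \<omega> y" using z by blast
      have mem: "comp_word \<theta> \<omega> x0 \<in> \<alpha>0" using \<omega>(1) by (simp add: \<alpha>0_def)
      have "norm (z - comp_word \<theta> \<omega> x0) = dist (comp_word \<theta> \<omega> y) (comp_word \<theta> \<omega> x0)"
        using \<omega>(3) by (simp add: dist_norm)
      also have "\<dots> \<le> L ^ k * dist y x0" using contr_word[of \<omega> y x0] \<omega>(1) by (simp add: lists_of_def)
      also have "\<dots> \<le> t" unfolding t_def using A0_dist[OF \<omega>(2) x0] L0 by (intro mult_left_mono) auto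
      finally have "norm (z - comp_word \<theta> \<omega> x0) \<le> t" .
      then have "Min ((\<lambda>a. norm (z - a) powr r) ` \<alpha>0) \<le> t powr r"
        using Min_powr_le[OF fin0 mem, of z r] r by (smt (verit) norm_ge_zero powr_mono2)
      then show "ennreal (Min ((\<lambda>a. norm (z - a) powr r) ` \<alpha>0)) \<le> ennreal (t powr r)" by (rule ennreal_leI)
    qed
  qed
  also have "\<dots> = ennreal (t powr r)" using M.emeasure_space_1 by simp
  also have "\<dots> < ennreal \<rho>" using tr \<rho> by (intro ennreal_lessI)
  finally have lt: "qE r mu \<alpha>0 < ennreal \<rho>" .
  have "quant_error n r mu < ennreal \<rho>" if "n \<ge> card \<alpha>0" for n
    using quant_error_le[OF fin0 ne0 that, of r mu] lt by (rule le_less_trans)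
  then show ?thesis unfolding \<rho>_def by blast
qed

theorem quant_main:
  assumes r: "r > 0"
  shows "\<exists>n0::nat. \<forall>n\<ge>n0. \<exists>ni :: 'i \<Rightarrow> nat. (\<Sum>k\<in>I. ni k) \<le> n \<and>
     (\<Sum>k\<in>I. ennreal (w k * Sf k powr r) * quant_error (ni k) r mu) \<le> quant_error n r mu"
proof -
  define \<rho> where "\<rho> = ennreal ((dl/4) powr r * rho')"
  obtain n0 where n0: "\<forall>n\<ge>n0. quant_error n r mu < \<rho>" using small_quant[OF r] by (auto simp: \<rho>_def)
  have "\<exists>ni :: 'i \<Rightarrow> nat. (\<Sum>k\<in>I. ni k) \<le> n \<and>
     (\<Sum>k\<in>I. ennreal (w k * Sf k powr r) * quant_error (ni k) r mu) \<le> quant_error n r mu" if n: "n \<ge> n0" for n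
  proof -
    define Adm where "Adm = {\<alpha> :: 'a set. finite \<alpha> \<and> \<alpha> \<noteq> {} \<and> card \<alpha> \<le> n}"
    define Fa where "Fa \<alpha> = (\<lambda>k. if k \<in> I then card (ak \<alpha> k) else 0)" for \<alpha> :: "'a set"
    define G where "G ni = (\<Sum>k\<in>I. ennreal (w k * Sf k powr r) * quant_error (ni k) r mu)" for ni
    define T where "T = Fa ` {\<alpha>\<in>Adm. qE r mu \<alpha> < \<rho>}"
    have qn: "quant_error n r mu < \<rho>" using n0 n by auto
    have GFa: "G (Fa \<alpha>) = (\<Sum>k\<in>I. ennreal (w k * Sf k powr r) * quant_error (card (ak \<alpha> k)) r mu)" for \<alpha> :: "'a set"
      unfolding G_def Fa_def by (intro sum.cong) auto
    have sumFa: "(\<Sum>k\<in>I. Fa \<alpha> k) = (\<Sum>k\<in>I. card (ak \<alpha> k))" for \<alpha> :: "'a set"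
      unfolding Fa_def by (intro sum.cong) auto
    from qn obtain \<alpha>1 where "\<alpha>1 \<in> Adm" "qE r mu \<alpha>1 < \<rho>"
      unfolding quant_error_qE Adm_def INF_less_iff by blast
    then have Tne: "T \<noteq> {}" by (auto simp: T_def)
    have Tfin: "finite T"
    proof (rule finite_subset[OF _ finite_set_of_finite_funs[OF finI finite_atMost[of n], of 0]])
      show "T \<subseteq> {f. \<forall>x. (x \<in> I \<longrightarrow> f x \<in> {..n}) \<and> (x \<notin> I \<longrightarrow> f x = 0)}"
      proof
        fix f assume "f \<in> T"
        then obtain \<alpha> where \<alpha>: "\<alpha> \<in> Adm" "f = Fa \<alpha>" by (auto simp: T_def)
        have "card (ak \<alpha> k) \<le> n" for k
          using card_mono[OF _ ak_sub, of \<alpha> k] \<alpha>(1) by (auto simp: Adm_def)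
        then show "f \<in> {f. \<forall>x. (x \<in> I \<longrightarrow> f x \<in> {..n}) \<and> (x \<notin> I \<longrightarrow> f x = 0)}"
          using \<alpha>(2) by (auto simp: Fa_def)
      qed
    qed
    have "Min (G ` T) \<in> G ` T" using Tfin Tne by (intro Min_in) auto
    then obtain ni where ni: "ni \<in> T" "G ni = Min (G ` T)" by auto
    from ni(1) obtain \<alpha> where \<alpha>: "\<alpha> \<in> Adm" "ni = Fa \<alpha>" by (auto simp: T_def)
    have sum_ni: "(\<Sum>k\<in>I. ni k) \<le> n"
      using sum_ak[of \<alpha>] \<alpha> sumFa[of \<alpha>] by (auto simp: Adm_def)
    have "G ni \<le> quant_error n r mu"
    proof (rule ccontr)
      assume "\<not> G ni \<le> quant_error n r mu"
      then have lt: "quant_error n r mu < min (G ni) \<rho>" using qn by (simp add: not_le)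
      then obtain \<beta> where \<beta>: "\<beta> \<in> Adm" "qE r mu \<beta> < min (G ni) \<rho>"
        unfolding quant_error_qE Adm_def INF_less_iff by blast
      have cov: "\<forall>x\<in>A0. \<exists>a\<in>\<beta>. dist x a < dl/2"
      proof (rule ccontr)
        assume "\<not> (\<forall>x\<in>A0. \<exists>a\<in>\<beta>. dist x a < dl/2)"
        then obtain x where "x \<in> A0" "\<forall>a\<in>\<beta>. dl/2 \<le> dist x a" by (auto simp: not_less)
        then have "\<rho> \<le> qE r mu \<beta>" using uncovered[OF r] \<beta>(1) by (auto simp: Adm_def \<rho>_def)
        with \<beta>(2) show False by (metis min_less_iff_conj not_le)
      qed
      have "G (Fa \<beta>) \<le> qE r mu \<beta>" unfolding GFa using core[OF r _ _ cov] \<beta>(1) by (auto simp: Adm_def)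
      moreover have "Fa \<beta> \<in> T" using \<beta> by (auto simp: T_def)
      then have "G ni \<le> G (Fa \<beta>)" using ni(2) Tfin by simp
      ultimately show False using \<beta>(2) by (meson dual_order.trans min_less_iff_conj not_le)
    qed
    then show ?thesis using sum_ni by (auto simp: G_def)
  qed
  then show ?thesis by blast
qed

end


lemma attractor_cong:
  assumes "\<And>k. k \<in> I \<Longrightarrow> \<theta> k = \<theta>' k"
  shows "attractor I \<theta> = attractor I \<theta>'"
proof -
  have "\<And>A. (\<Union>k\<in>I. \<theta> k ` A) = (\<Union>k\<in>I. \<theta>' k ` A)" using assms by auto
  then show ?thesis unfolding attractor_def by simp
qed

lemma invariant_measure_cong:
  assumes "\<And>k. k \<in> I \<Longrightarrow> \<theta> k = \<theta>' k"
  shows "invariant_measure I \<theta> w = invariant_measure I \<theta>' w"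
proof -
  have "\<And>\<nu> B. (\<Sum>k\<in>I. ennreal (w k) * emeasure \<nu> (\<theta> k -` B)) = (\<Sum>k\<in>I. ennreal (w k) * emeasure \<nu> (\<theta>' k -` B))"
    using assms by (intro sum.cong) auto
  then show ?thesis unfolding invariant_measure_def by simp
qed

lemma bilip_surj:
  fixes f :: "'a::euclidean_space \<Rightarrow> 'a"
  assumes s: "0 < s" and c: "0 \<le> c"
    and low: "\<And>x y. s * norm (x - y) \<le> norm (f x - f y)"
    and up: "\<And>x y. norm (f x - f y) \<le> c * norm (x - y)"
  shows "surj f"
proof -
  have cont: "continuous_on UNIV f"
    by (rule lipschitz_on_continuous_on[of c]) (auto intro!: lipschitz_onI simp: dist_norm up c)
  have inj: "inj f"
  proof (rule injI)
    fix x y assume "f x = f y"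
    then have "s * norm (x - y) \<le> 0" using low[of x y] by simp
    then show "x = y" using s by (simp add: mult_le_0_iff)
  qed
  have op: "open (range f)" by (rule invariance_of_domain[OF cont open_UNIV inj_on_subset[OF inj]]) auto
  have cl: "closed (range f)"
  proof (unfold closed_sequential_limits, intro allI impI, elim conjE)
    fix y l assume y: "\<forall>n. y n \<in> range f" and lim: "y \<longlonglongrightarrow> l"
    define x where "x n = inv f (y n)" for n
    have fx: "f (x n) = y n" for n using y by (auto simp: x_def f_inv_into_f)
    have "Cauchy y" using lim by (rule LIMSEQ_imp_Cauchy)
    have "Cauchy x"
      unfolding Cauchy_iff
    proof (intro allI impI)
      fix e :: real assume e: "e > 0"
      then obtain M where M: "\<forall>m\<ge>M. \<forall>n\<ge>M. norm (y m - y n) < s * e"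
        using \<open>Cauchy y\<close> s unfolding Cauchy_iff by (meson mult_pos_pos)
      have "norm (x m - x n) < e" if "m \<ge> M" "n \<ge> M" for m n
      proof -
        have "s * norm (x m - x n) \<le> norm (y m - y n)" using low[of "x m" "x n"] by (simp add: fx)
        also have "\<dots> < s * e" using M that by blast
        finally show ?thesis using s by simp
      qed
      then show "\<exists>M. \<forall>m\<ge>M. \<forall>n\<ge>M. norm (x m - x n) < e" by blast
    qed
    then obtain x0 where x0: "x \<longlonglongrightarrow> x0" using Cauchy_convergent convergent_def by blast
    have "isCont f x0" using cont by (simp add: continuous_on_eq_continuous_at)
    from isCont_tendsto_compose[OF this x0] have "(\<lambda>n. f (x n)) \<longlonglongrightarrow> f x0" .
    then have "y \<longlonglongrightarrow> f x0" by (simp add: fx)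
    then have "l = f x0" using lim LIMSEQ_unique by blast
    then show "l \<in> range f" by simp
  qed
  have "range f = UNIV" using clopen[of "range f"] op cl by auto
  then show ?thesis .
qed

context
  fixes N :: nat and f :: "nat \<Rightarrow> 'a::euclidean_space \<Rightarrow> 'a" and s c :: "nat \<Rightarrow> real"
  assumes sc: "\<forall>i\<in>{1..N}. 0 < s i \<and> s i \<le> c i \<and> c i < 1"
    and bilip: "\<forall>i\<in>{1..N}. \<forall>x y. s i * norm (x - y) \<le> norm (f i x - f i y) \<and>
                                   norm (f i x - f i y) \<le> c i * norm (x - y)"
begin

lemma word_bilip:
  "set \<omega> \<subseteq> {1..N} \<Longrightarrow> prod_word s \<omega> * norm (x - y) \<le> norm (comp_word f \<omega> x - comp_word f \<omega> y) \<and>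
     norm (comp_word f \<omega> x - comp_word f \<omega> y) \<le> prod_word c \<omega> * norm (x - y)"
proof (induction \<omega>)
  case Nil then show ?case by simp
next
  case (Cons k \<omega>)
  have k: "k \<in> {1..N}" using Cons.prems by auto
  have IH: "prod_word s \<omega> * norm (x - y) \<le> norm (comp_word f \<omega> x - comp_word f \<omega> y)"
    "norm (comp_word f \<omega> x - comp_word f \<omega> y) \<le> prod_word c \<omega> * norm (x - y)"
    using Cons by auto
  have sk: "0 < s k" "s k \<le> c k" using sc k by auto
  have "s k * (prod_word s \<omega> * norm (x - y)) \<le> s k * norm (comp_word f \<omega> x - comp_word f \<omega> y)"
    using IH(1) sk by (intro mult_left_mono) auto
  also have "\<dots> \<le> norm (f k (comp_word f \<omega> x) - f k (comp_word f \<omega> y))" using bilip k by blast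
  finally have 1: "prod_word s (k#\<omega>) * norm (x - y) \<le> norm (comp_word f (k#\<omega>) x - comp_word f (k#\<omega>) y)"
    by (simp add: mult.assoc)
  have "norm (f k (comp_word f \<omega> x) - f k (comp_word f \<omega> y)) \<le> c k * norm (comp_word f \<omega> x - comp_word f \<omega> y)"
    using bilip k by blast
  also have "\<dots> \<le> c k * (prod_word c \<omega> * norm (x - y))" using IH(2) sk by (intro mult_left_mono) auto
  finally have 2: "norm (comp_word f (k#\<omega>) x - comp_word f (k#\<omega>) y) \<le> prod_word c (k#\<omega>) * norm (x - y)"
    by (simp add: mult.assoc)
  show ?case using 1 2 by blast
qed

lemma f_inj: "i \<in> {1..N} \<Longrightarrow> inj (f i)"
proof (rule injI)
  fix x y assume i: "i \<in> {1..N}" and "f i x = f i y"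
  then have "s i * norm (x - y) \<le> 0" using bilip by (metis norm_zero right_minus_eq)
  moreover have si: "s i > 0" using sc i by auto
  ultimately have "norm (x - y) \<le> 0" by (simp add: mult_le_0_iff)
  then show "x = y" by simp
qed

lemma f_surj: "i \<in> {1..N} \<Longrightarrow> surj (f i)"
proof -
  assume i: "i \<in> {1..N}"
  then have "0 < s i" "s i \<le> c i" using sc by auto
  then have "0 \<le> c i" by linarith
  show ?thesis by (rule bilip_surj[of "s i" "c i"]) (use \<open>0 < s i\<close> \<open>0 \<le> c i\<close> bilip i in auto)
qed

lemma word_surj: "set \<omega> \<subseteq> {1..N} \<Longrightarrow> surj (comp_word f \<omega>)"
proof (induction \<omega>)
  case (Cons a \<omega>)
  have "surj (f a \<circ> comp_word f \<omega>)" using Cons by (intro comp_surj f_surj) auto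
  then show ?case by simp
qed simp

lemma word_disj:
  assumes U: "\<forall>i\<in>{1..N}. f i ` U \<subseteq> U" "\<forall>i\<in>{1..N}. \<forall>j\<in>{1..N}. i \<noteq> j \<longrightarrow> f i ` U \<inter> f j ` U = {}"
  shows "length \<tau> = length \<tau>' \<Longrightarrow> set \<tau> \<subseteq> {1..N} \<Longrightarrow> set \<tau>' \<subseteq> {1..N} \<Longrightarrow> \<tau> \<noteq> \<tau>' \<Longrightarrow>
     comp_word f \<tau> ` U \<inter> comp_word f \<tau>' ` U = {}"
proof (induction \<tau> arbitrary: \<tau>')
  case Nil then show ?case by simp
next
  case (Cons a \<tau>)
  obtain b \<tau>'' where t': "\<tau>' = b # \<tau>''" using Cons.prems(1) by (cases \<tau>') auto
  have into: "comp_word f \<omega> ` U \<subseteq> U" if "set \<omega> \<subseteq> {1..N}" for \<omega>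
    using that
  proof (induction \<omega>)
    case (Cons a \<omega>)
    have "comp_word f (a#\<omega>) ` U = f a ` (comp_word f \<omega> ` U)" by (simp add: image_comp)
    also have "\<dots> \<subseteq> f a ` U" using Cons by (intro image_mono) auto
    also have "\<dots> \<subseteq> U" using U(1) Cons.prems by auto
    finally show ?case .
  qed simp
  have ab: "a \<in> {1..N}" "b \<in> {1..N}" using Cons.prems t' by auto
  show ?case
  proof (cases "a = b")
    case False
    have "comp_word f (a#\<tau>) ` U \<subseteq> f a ` U" using into[of \<tau>] Cons.prems by (auto simp: image_comp[symmetric])
    moreover have "comp_word f \<tau>' ` U \<subseteq> f b ` U" using into[of \<tau>''] Cons.prems t' by (auto simp: image_comp[symmetric])
    ultimately show ?thesis using U(2) ab False by blast
  next
    case True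
    have "comp_word f \<tau> ` U \<inter> comp_word f \<tau>'' ` U = {}"
      using Cons.IH[of \<tau>''] Cons.prems t' True by auto
    then have "f a ` (comp_word f \<tau> ` U) \<inter> f a ` (comp_word f \<tau>'' ` U) = {}"
      using f_inj[OF ab(1)] by (simp add: image_Int[symmetric])
    then show ?thesis using t' True by (simp add: image_comp)
  qed
qed

end


lemma prod_word_nonneg: "(\<And>k. k \<in> set \<omega> \<Longrightarrow> 0 \<le> c k) \<Longrightarrow> 0 \<le> prod_word c \<omega>"
  by (induction \<omega>) auto

lemma prod_word_le_pow:
  fixes L :: real
  shows "(\<And>k. k \<in> set \<omega> \<Longrightarrow> 0 \<le> c k \<and> c k \<le> L) \<Longrightarrow> prod_word c \<omega> \<le> L ^ length \<omega>"
proof (induction \<omega>)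
  case (Cons a \<omega>)
  have "0 \<le> prod_word c \<omega>" using Cons.prems by (intro prod_word_nonneg) auto
  moreover have "prod_word c \<omega> \<le> L ^ length \<omega>" using Cons by auto
  moreover have "0 \<le> c a" "c a \<le> L" using Cons.prems by auto
  ultimately show ?case by (simp add: mult_mono)
qed simp

theorem mainTheorem18:
  fixes N :: nat
    and f :: "nat \<Rightarrow> 'a::euclidean_space \<Rightarrow> 'a"
    and p s c :: "nat \<Rightarrow> real"
  assumes p_pos: "\<forall>i\<in>{1..N}. p i > 0"
    and p_sum: "(\<Sum>i\<in>{1..N}. p i) = 1"
    and sc: "\<forall>i\<in>{1..N}. 0 < s i \<and> s i \<le> c i \<and> c i < 1"
    and bilip: "\<forall>i\<in>{1..N}. \<forall>x y. s i * norm (x - y) \<le> norm (f i x - f i y) \<and>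
                                   norm (f i x - f i y) \<le> c i * norm (x - y)"
    and sosc: "SOSC {1..N} f"
  shows "\<exists>\<sigma>. set \<sigma> \<subseteq> {1..N} \<and>
    (\<forall>m\<ge>1.
      (\<forall>\<tau>\<in>words N m.
          prod_word s \<tau> * prod_word s \<sigma> \<in> {0<..<1} \<and>
          prod_word c \<tau> * prod_word c \<sigma> \<in> {0<..<1} \<and>
          (\<forall>x y. prod_word s \<tau> * prod_word s \<sigma> * norm (x - y)
                   \<le> norm ((comp_word f \<tau> \<circ> comp_word f \<sigma>) x - (comp_word f \<tau> \<circ> comp_word f \<sigma>) y)
               \<and> norm ((comp_word f \<tau> \<circ> comp_word f \<sigma>) x - (comp_word f \<tau> \<circ> comp_word f \<sigma>) y)
                   \<le> prod_word c \<tau> * prod_word c \<sigma> * norm (x - y))) \<and>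
      SSC (words N m) (\<lambda>\<tau>. comp_word f \<tau> \<circ> comp_word f \<sigma>) \<and>
      (\<forall>r>0. \<exists>n0::nat. \<forall>n\<ge>n0. \<exists>ni :: nat list \<Rightarrow> nat.
          (\<Sum>\<tau>\<in>words N m. ni \<tau>) \<le> n \<and>
          quant_error n r (invariant_measure (words N m) (\<lambda>\<tau>. comp_word f \<tau> \<circ> comp_word f \<sigma>) (prod_word p))
          \<ge> (\<Sum>\<tau>\<in>words N m. ennreal (prod_word p \<tau> * (prod_word s \<tau> * prod_word s \<sigma>) powr r) *
               quant_error (ni \<tau>) r (invariant_measure (words N m) (\<lambda>\<tau>. comp_word f \<tau> \<circ> comp_word f \<sigma>) (prod_word p)))))"
proof -
  define I1 where "I1 = {1..N}"
  have N1: "N \<ge> 1" using p_sum by (cases N) auto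
  have I1fin: "finite I1" and I1ne: "I1 \<noteq> {}" and one: "1 \<in> I1" using N1 by (auto simp: I1_def)
  define L where "L = Max (c ` I1)"
  have cL: "c i \<le> L" if "i \<in> I1" for i using that I1fin by (simp add: L_def)
  have "L \<in> c ` I1" unfolding L_def using I1fin I1ne by (intro Max_in) auto
  then have L1: "L < 1" using sc by (auto simp: I1_def)
  have "0 < s 1" "s 1 \<le> c 1" using sc one by (auto simp: I1_def)
  then have L0: "0 \<le> L" using cL[OF one] by linarith
  define f' where "f' k = (if k \<in> I1 then f k else f 1)" for k
  define M0 where "M0 = Max ((\<lambda>k. norm (f k 0)) ` I1)"
  have ff': "k \<in> I1 \<Longrightarrow> f' k = f k" for k by (simp add: f'_def)
  have contr': "dist (f' k x) (f' k y) \<le> L * dist x y" for k x y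
  proof -
    define k' where "k' = (if k \<in> I1 then k else 1)"
    have k': "k' \<in> I1" "f' k = f k'" using one by (auto simp: k'_def f'_def)
    have "norm (f k' x - f k' y) \<le> c k' * norm (x - y)" using bilip k' by (auto simp: I1_def)
    also have "\<dots> \<le> L * norm (x - y)" using cL[OF k'(1)] by (intro mult_right_mono) auto
    finally show ?thesis using k' by (simp add: dist_norm)
  qed
  have bnd': "norm (f' k 0) \<le> M0" for k
    using I1fin one by (auto simp: f'_def M0_def)
  interpret W: ifs I1 f' L M0
    by unfold_locales (use I1fin I1ne L0 L1 contr' bnd' in auto)
  have fw: "set \<omega> \<subseteq> I1 \<Longrightarrow> comp_word f \<omega> = comp_word f' \<omega>" for \<omega>
    by (intro comp_word_cong) (auto simp: ff')
  have attrW: "attractor {1..N} f = W.A0"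
    unfolding I1_def[symmetric] using W.attractor_eq attractor_cong[of I1 f f'] ff' by simp
  obtain U where U: "open U" "\<forall>i\<in>{1..N}. f i ` U \<subseteq> U"
      "\<forall>i\<in>{1..N}. \<forall>j\<in>{1..N}. i \<noteq> j \<longrightarrow> f i ` U \<inter> f j ` U = {}" "U \<inter> W.A0 \<noteq> {}"
    using sosc attrW unfolding SOSC_def by auto
  obtain x where x: "x \<in> U" "x \<in> W.A0" using U(4) by auto
  obtain e where e: "e > 0" "ball x e \<subseteq> U" using U(1) x(1) open_contains_ball by blast
  obtain k where k: "L ^ k * (2 * W.R) < e" using exists_pow_small[OF L0 L1 e(1)] by blast
  have "W.A0 \<subseteq> (\<Union>\<omega>\<in>lists_of I1 k. comp_word f' \<omega> ` W.A0)" by (rule equalityD1[OF W.A0_iter])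
  then obtain \<sigma> y where \<sigma>: "\<sigma> \<in> lists_of I1 k" "y \<in> W.A0" "x = comp_word f' \<sigma> y" using x(2) by blast
  have \<sigma>set: "set \<sigma> \<subseteq> I1" using \<sigma>(1) by (simp add: lists_of_def)
  have \<sigma>U: "comp_word f \<sigma> ` W.A0 \<subseteq> U"
  proof
    fix z assume "z \<in> comp_word f \<sigma> ` W.A0"
    then obtain z0 where z0: "z0 \<in> W.A0" "z = comp_word f' \<sigma> z0" using fw[OF \<sigma>set] by auto
    have "dist x z \<le> L ^ k * dist y z0" using W.contr_word[of \<sigma> y z0] \<sigma> z0 by (simp add: lists_of_def)
    also have "\<dots> \<le> L ^ k * (2 * W.R)" using W.A0_dist[OF \<sigma>(2) z0(1)] L0 by (intro mult_left_mono) auto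
    finally have "z \<in> ball x e" using k by simp
    then show "z \<in> U" using e by blast
  qed
  have intoW: "comp_word f \<omega> ` W.A0 \<subseteq> W.A0" if "set \<omega> \<subseteq> I1" for \<omega>
    using W.word_into[of W.A0 \<omega>] W.A0_into that fw[OF that] by auto
  show ?thesis
  proof (intro exI[of _ \<sigma>] conjI allI impI)
    show "set \<sigma> \<subseteq> {1..N}" using \<sigma>set by (simp add: I1_def)
    fix m :: nat assume m: "1 \<le> m"
    define I2 where "I2 = words N m"
    have I2eq: "I2 = lists_of I1 m" by (simp add: I2_def words_eq I1_def)
    have memI2: "\<tau> \<in> I2 \<Longrightarrow> length \<tau> = m \<and> set \<tau> \<subseteq> I1" for \<tau> by (simp add: I2eq lists_of_def)
    define g where "g \<tau> = comp_word f \<tau> \<circ> comp_word f \<sigma>" for \<tau>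
    define \<tau>0 where "\<tau>0 = replicate m (1::nat)"
    have \<tau>0: "\<tau>0 \<in> I2" using one by (simp add: I2eq lists_of_def \<tau>0_def set_replicate_conv_if)
    define g' where "g' \<tau> = (if \<tau> \<in> I2 then g \<tau> else g \<tau>0)" for \<tau>
    define L2 where "L2 = L ^ m * L ^ length \<sigma>"
    define M2 where "M2 = Max ((\<lambda>\<tau>. norm (g \<tau> 0)) ` I2)"
    define Sf where "Sf \<tau> = prod_word s \<tau> * prod_word s \<sigma>" for \<tau>
    have I2fin: "finite I2" by (simp add: I2eq finite_lists_of[OF I1fin])
    have I2ne: "I2 \<noteq> {}" using \<tau>0 by auto
    have sc1: "\<And>i. i \<in> I1 \<Longrightarrow> 0 < s i \<and> s i \<le> c i \<and> c i < 1" using sc by (simp add: I1_def)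
    have bil1: "\<And>i x y. i \<in> I1 \<Longrightarrow> s i * norm (x - y) \<le> norm (f i x - f i y) \<and> norm (f i x - f i y) \<le> c i * norm (x - y)"
      using bilip by (simp add: I1_def)
    have wbw: "prod_word s \<omega> * norm (x - y) \<le> norm (comp_word f \<omega> x - comp_word f \<omega> y) \<and>
     norm (comp_word f \<omega> x - comp_word f \<omega> y) \<le> prod_word c \<omega> * norm (x - y)" if "set \<omega> \<subseteq> I1" for \<omega> x y
      using word_bilip[OF sc bilip] that by (simp add: I1_def)
    have spos: "0 < prod_word s \<omega>" if "set \<omega> \<subseteq> I1" for \<omega> using sc1 that by (intro prod_word_pos) auto
    have cpos: "0 < prod_word c \<omega>" if "set \<omega> \<subseteq> I1" for \<omega> using sc1 that by (intro prod_word_pos) force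
    have sle1: "prod_word s \<omega> \<le> 1" if "set \<omega> \<subseteq> I1" for \<omega>
      using sc1 that by (intro prod_word_le1[THEN conjunct1]) force
    have cle1: "prod_word c \<omega> \<le> 1" if "set \<omega> \<subseteq> I1" for \<omega>
      using sc1 that by (intro prod_word_le1[THEN conjunct1]) force
    have slt1: "prod_word s \<tau> < 1" if "\<tau> \<in> I2" for \<tau>
      using sc1 memI2[OF that] m by (intro prod_word_lt1) force+
    have clt1: "prod_word c \<tau> < 1" if "\<tau> \<in> I2" for \<tau>
      using sc1 memI2[OF that] m by (intro prod_word_lt1) force+
    have wb: "prod_word s \<tau> * prod_word s \<sigma> * norm (x - y) \<le> norm (g \<tau> x - g \<tau> y) \<and>
              norm (g \<tau> x - g \<tau> y) \<le> prod_word c \<tau> * prod_word c \<sigma> * norm (x - y)" if \<tau>: "\<tau> \<in> I2" for \<tau> x y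
    proof -
      have t: "set \<tau> \<subseteq> I1" using memI2[OF \<tau>] by simp
      have A: "prod_word s \<sigma> * norm (x - y) \<le> norm (comp_word f \<sigma> x - comp_word f \<sigma> y)"
        "norm (comp_word f \<sigma> x - comp_word f \<sigma> y) \<le> prod_word c \<sigma> * norm (x - y)"
        using wbw[OF \<sigma>set] by auto
      have B: "prod_word s \<tau> * norm (comp_word f \<sigma> x - comp_word f \<sigma> y) \<le> norm (g \<tau> x - g \<tau> y)"
        "norm (g \<tau> x - g \<tau> y) \<le> prod_word c \<tau> * norm (comp_word f \<sigma> x - comp_word f \<sigma> y)"
        using wbw[OF t, of "comp_word f \<sigma> x" "comp_word f \<sigma> y"] by (auto simp: g_def)
      have "prod_word s \<tau> * prod_word s \<sigma> * norm (x - y) \<le> prod_word s \<tau> * norm (comp_word f \<sigma> x - comp_word f \<sigma> y)"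
        using A(1) spos[OF t] by (simp add: mult.assoc mult_left_mono)
      moreover have "prod_word c \<tau> * norm (comp_word f \<sigma> x - comp_word f \<sigma> y) \<le> prod_word c \<tau> * prod_word c \<sigma> * norm (x - y)"
        using A(2) cpos[OF t] by (simp add: mult.assoc mult_left_mono)
      ultimately show ?thesis using B by linarith
    qed
    have contr2: "dist (g' \<tau> x) (g' \<tau> y) \<le> L2 * dist x y" for \<tau> x y
    proof -
      define \<tau>' where "\<tau>' = (if \<tau> \<in> I2 then \<tau> else \<tau>0)"
      have t': "\<tau>' \<in> I2" "g' \<tau> = g \<tau>'" using \<tau>0 by (auto simp: \<tau>'_def g'_def)
      have "prod_word c \<tau>' \<le> L ^ m" using prod_word_le_pow[of \<tau>' c L] memI2[OF t'(1)] sc1 cL by force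
      moreover have "prod_word c \<sigma> \<le> L ^ length \<sigma>" using prod_word_le_pow[of \<sigma> c L] \<sigma>set sc1 cL by force
      ultimately have "prod_word c \<tau>' * prod_word c \<sigma> \<le> L2"
        unfolding L2_def using cpos[OF \<sigma>set] L0 by (intro mult_mono) auto
      then have "prod_word c \<tau>' * prod_word c \<sigma> * norm (x - y) \<le> L2 * norm (x - y)" by (simp add: mult_right_mono)
      then show ?thesis using wb[OF t'(1), of x y] t'(2) by (simp add: dist_norm)
    qed
    have L2_0: "0 \<le> L2" using L0 by (simp add: L2_def)
    have L2_1: "L2 < 1"
    proof -
      have "L ^ m < 1" using L0 L1 m by (simp add: power_less_one_iff)
      moreover have "L ^ length \<sigma> \<le> 1" using L0 L1 by (simp add: power_le_one)
      ultimately show ?thesis unfolding L2_def using L0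
        by (metis mult_less_cancel_right1 order.strict_trans1 mult_left_le zero_le_power)
    qed
    have bnd2: "norm (g' \<tau> 0) \<le> M2" for \<tau>
      using I2fin \<tau>0 by (auto simp: g'_def M2_def)
    interpret Q0: wifs I2 g' L2 M2 "prod_word p"
    proof unfold_locales
      show "finite I2" "I2 \<noteq> {}" "0 \<le> L2" "L2 < 1" by (fact I2fin I2ne L2_0 L2_1)+
      show "dist (g' k x) (g' k y) \<le> L2 * dist x y" for k x y by (rule contr2)
      show "norm (g' k 0) \<le> M2" for k by (rule bnd2)
      show "0 < prod_word p k" if "k \<in> I2" for k
        using memI2[OF that] p_pos by (intro prod_word_pos) (auto simp: I1_def)
      show "sum (prod_word p) I2 = 1" using sum_prod_word[OF I1fin] p_sum by (simp add: I2eq I1_def)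
    qed
    have gA: "g \<tau> ` W.A0 \<subseteq> comp_word f \<tau> ` U" if "\<tau> \<in> I2" for \<tau>
      using \<sigma>U by (auto simp: g_def)
    have QW: "Q0.A0 \<subseteq> W.A0"
    proof (rule Q0.A0_sub[OF W.A0_closed W.A0_ne])
      show "\<forall>k\<in>I2. g' k ` W.A0 \<subseteq> W.A0"
      proof
        fix \<tau> assume t: "\<tau> \<in> I2"
        have "g' \<tau> ` W.A0 = comp_word f \<tau> ` (comp_word f \<sigma> ` W.A0)" using t by (simp add: g'_def g_def image_comp)
        also have "\<dots> \<subseteq> comp_word f \<tau> ` W.A0" using intoW[OF \<sigma>set] by (rule image_mono)
        also have "\<dots> \<subseteq> W.A0" using intoW memI2[OF t] by blast
        finally show "g' \<tau> ` W.A0 \<subseteq> W.A0" .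
      qed
    qed
    have sepQ: "g' \<tau> ` Q0.A0 \<inter> g' \<tau>' ` Q0.A0 = {}" if "\<tau> \<in> I2" "\<tau>' \<in> I2" "\<tau> \<noteq> \<tau>'" for \<tau> \<tau>'
    proof -
      have "g' \<tau> ` Q0.A0 \<subseteq> comp_word f \<tau> ` U" using gA[OF that(1)] QW that(1) by (auto simp: g'_def)
      moreover have "g' \<tau>' ` Q0.A0 \<subseteq> comp_word f \<tau>' ` U" using gA[OF that(2)] QW that(2) by (auto simp: g'_def)
      moreover have "comp_word f \<tau> ` U \<inter> comp_word f \<tau>' ` U = {}"
        using word_disj[OF sc bilip U(2) U(3)] memI2[OF that(1)] memI2[OF that(2)] that(3) by (auto simp: I1_def)
      ultimately show ?thesis by blast
    qed
    interpret Q: qifs I2 g' L2 M2 "prod_word p" Sf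
    proof unfold_locales
      show "0 < Sf k" if "k \<in> I2" for k using spos memI2[OF that] spos[OF \<sigma>set] by (simp add: Sf_def)
      show "Sf k * dist x y \<le> dist (g' k x) (g' k y)" if "k \<in> I2" for k x y
        using wb[OF that, of x y] that by (simp add: Sf_def g'_def dist_norm)
      show "surj (g' k)" if "k \<in> I2" for k
      proof -
        have "surj (comp_word f \<sigma>)" using word_surj[OF sc bilip] \<sigma>set by (simp add: I1_def)
        moreover have "surj (comp_word f k)" using word_surj[OF sc bilip] memI2[OF that] by (simp add: I1_def)
        ultimately have "surj (comp_word f k \<circ> comp_word f \<sigma>)" by (rule comp_surj)
        then show ?thesis using that by (simp add: g'_def g_def)
      qed
      show "g' k ` Q0.A0 \<inter> g' k' ` Q0.A0 = {}" if "k \<in> I2" "k' \<in> I2" "k \<noteq> k'" for k k' by (rule sepQ[OF that])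
    qed
    have gcong: "\<And>\<tau>. \<tau> \<in> words N m \<Longrightarrow> (comp_word f \<tau> \<circ> comp_word f \<sigma>) = g' \<tau>"
      by (simp add: g'_def g_def I2_def)
    have attrQ: "attractor (words N m) (\<lambda>\<tau>. comp_word f \<tau> \<circ> comp_word f \<sigma>) = Q0.A0"
      using attractor_cong[of "words N m" "\<lambda>\<tau>. comp_word f \<tau> \<circ> comp_word f \<sigma>" g'] gcong Q0.attractor_eq
      by (simp add: I2_def)
    have muQ: "invariant_measure (words N m) (\<lambda>\<tau>. comp_word f \<tau> \<circ> comp_word f \<sigma>) (prod_word p) = Q0.mu"
      using invariant_measure_cong[of "words N m" "\<lambda>\<tau>. comp_word f \<tau> \<circ> comp_word f \<sigma>" g'] gcong Q0.invariant_measure_eq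
      by (simp add: I2_def)
    show "\<forall>\<tau>\<in>words N m.
          prod_word s \<tau> * prod_word s \<sigma> \<in> {0<..<1} \<and>
          prod_word c \<tau> * prod_word c \<sigma> \<in> {0<..<1} \<and>
          (\<forall>x y. prod_word s \<tau> * prod_word s \<sigma> * norm (x - y)
                   \<le> norm ((comp_word f \<tau> \<circ> comp_word f \<sigma>) x - (comp_word f \<tau> \<circ> comp_word f \<sigma>) y)
               \<and> norm ((comp_word f \<tau> \<circ> comp_word f \<sigma>) x - (comp_word f \<tau> \<circ> comp_word f \<sigma>) y)
                   \<le> prod_word c \<tau> * prod_word c \<sigma> * norm (x - y))"
    proof
      fix \<tau> assume t: "\<tau> \<in> words N m"
      then have t2: "\<tau> \<in> I2" by (simp add: I2_def)
      have ts: "set \<tau> \<subseteq> I1" using memI2[OF t2] by simp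
      have "prod_word s \<tau> * prod_word s \<sigma> \<le> prod_word s \<tau>"
        using sle1[OF \<sigma>set] spos[OF ts] by (simp add: mult_left_le)
      moreover have "0 < prod_word s \<tau> * prod_word s \<sigma>" using spos[OF ts] spos[OF \<sigma>set] by simp
      ultimately have r1: "prod_word s \<tau> * prod_word s \<sigma> \<in> {0<..<1}"
        using slt1[OF t2] by simp
      have "prod_word c \<tau> * prod_word c \<sigma> \<le> prod_word c \<tau>"
        using cle1[OF \<sigma>set] cpos[OF ts] by (simp add: mult_left_le)
      moreover have "0 < prod_word c \<tau> * prod_word c \<sigma>" using cpos[OF ts] cpos[OF \<sigma>set] by simp
      ultimately have r2: "prod_word c \<tau> * prod_word c \<sigma> \<in> {0<..<1}"
        using clt1[OF t2] by simp
      show "prod_word s \<tau> * prod_word s \<sigma> \<in> {0<..<1} \<and>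
          prod_word c \<tau> * prod_word c \<sigma> \<in> {0<..<1} \<and>
          (\<forall>x y. prod_word s \<tau> * prod_word s \<sigma> * norm (x - y)
                   \<le> norm ((comp_word f \<tau> \<circ> comp_word f \<sigma>) x - (comp_word f \<tau> \<circ> comp_word f \<sigma>) y)
               \<and> norm ((comp_word f \<tau> \<circ> comp_word f \<sigma>) x - (comp_word f \<tau> \<circ> comp_word f \<sigma>) y)
                   \<le> prod_word c \<tau> * prod_word c \<sigma> * norm (x - y))"
        using r1 r2 wb[OF t2] by (simp add: g_def)
    qed
    show "SSC (words N m) (\<lambda>\<tau>. comp_word f \<tau> \<circ> comp_word f \<sigma>)"
      unfolding SSC_def attrQ
    proof (intro ballI impI)
      fix \<tau> \<tau>' assume "\<tau> \<in> words N m" "\<tau>' \<in> words N m" "\<tau> \<noteq> \<tau>'"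
      then show "(comp_word f \<tau> \<circ> comp_word f \<sigma>) ` Q0.A0 \<inter> (comp_word f \<tau>' \<circ> comp_word f \<sigma>) ` Q0.A0 = {}"
        using sepQ[of \<tau> \<tau>'] gcong by (simp add: I2_def)
    qed
    fix r :: real assume r: "r > 0"
      show "\<exists>n0::nat. \<forall>n\<ge>n0. \<exists>ni :: nat list \<Rightarrow> nat.
          (\<Sum>\<tau>\<in>words N m. ni \<tau>) \<le> n \<and>
          quant_error n r (invariant_measure (words N m) (\<lambda>\<tau>. comp_word f \<tau> \<circ> comp_word f \<sigma>) (prod_word p))
          \<ge> (\<Sum>\<tau>\<in>words N m. ennreal (prod_word p \<tau> * (prod_word s \<tau> * prod_word s \<sigma>) powr r) *
               quant_error (ni \<tau>) r (invariant_measure (words N m) (\<lambda>\<tau>. comp_word f \<tau> \<circ> comp_word f \<sigma>) (prod_word p)))"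
        unfolding muQ using Q.quant_main[OF r] by (simp add: Sf_def I2_def)
  qed
qed

end
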